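(* Let $H$ be a cocommutative Hopf algebra and $\mathcal{A}$ an $H$-bimodule algebra. Then the L-R-smash product $\mathcal{A}\natural H$ is isomorphic as an algebra to the smash product $\mathcal{A}\# H$, where $\mathcal{A}$ is regarded as a left $H$-module algebra via $h\rightarrow\varphi=h_1\cdot\varphi\cdot S(h_2)$.
   Context: Work over a field $k$, $H$ an ordinary Hopf algebra with antipode $S$, $\Delta(h)=h_1\otimes h_2$. An $H$-bimodule algebra is an associative unital algebra $\mathcal{A}$ which is an $H$-bimodule (actions $h\cdot\varphi$, $\varphi\cdot h$) with $h\cdot(\varphi\psi)=(h_1\cdot\varphi)(h_2\cdot\psi)$, $(\varphi\psi)\cdot h=(\varphi\cdot h_1)(\psi\cdot h_2)$, $h\cdot1=1\cdot h=\varepsilon(h)1$. The L-R-smash product $\mathcal{A}\natural H$ is $\mathcal{A}\otimes H$ with product $(\varphi\natural h)(\psi\natural h')=(\varphi\cdot h'_2)(h_1\cdot\psi)\natural h_2h'_1$ and unit $1\natural1$. For a left $H$-module algebra $\mathcal{A}$ with action $\rightarrow$, the smash product $\mathcal{A}\# H$ is $\mathcal{A}\otimes H$ with product $(\varphi\# h)(\varphi'\# h')=\varphi(h_1\rightarrow\varphi')\# h_2h'$. *)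

theory Defs
  imports Complex_Main "HOL-Library.Poly_Mapping"
begin

definition k_algebra :: "('k::field \<Rightarrow> 'r::ring_1 \<Rightarrow> 'r) \<Rightarrow> bool" where
  "k_algebra sc \<longleftrightarrow> vector_space sc \<and>
     (\<forall>c x y. sc c (x * y) = sc c x * y \<and> sc c (x * y) = x * sc c y)"

text \<open>An element of \<open>X \<otimes> Y\<close> is written as a finite list of pairs \<open>[(x_i,y_i)]\<close>
  standing for \<open>\<Sum> x_i \<otimes> y_i\<close>. Two such lists are equal in the tensor product
  iff their difference in the free k-vector space on \<open>X \<times> Y\<close> lies in the span of
  the bilinearity relations (the standard construction of \<open>X \<otimes>\<^sub>k Y\<close>).\<close>

definition fscale :: "'k::comm_ring_1 \<Rightarrow> ('i \<Rightarrow>\<^sub>0 'k) \<Rightarrow> ('i \<Rightarrow>\<^sub>0 'k)" where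
  "fscale c p = Poly_Mapping.map (\<lambda>a. c * a) p"

definition tfree :: "'i list \<Rightarrow> ('i \<Rightarrow>\<^sub>0 'k::comm_ring_1)" where
  "tfree xs = sum_list (map (\<lambda>p. Poly_Mapping.single p 1) xs)"

definition trel2 :: "('k::field \<Rightarrow> 'x::ab_group_add \<Rightarrow> 'x) \<Rightarrow> ('k \<Rightarrow> 'y::ab_group_add \<Rightarrow> 'y)
    \<Rightarrow> (('x \<times> 'y) \<Rightarrow>\<^sub>0 'k) set" where
  "trel2 sX sY =
     {Poly_Mapping.single (x + x', y) 1 - Poly_Mapping.single (x, y) 1 - Poly_Mapping.single (x', y) 1
        | x x' y. True}
   \<union> {Poly_Mapping.single (x, y + y') 1 - Poly_Mapping.single (x, y) 1 - Poly_Mapping.single (x, y') 1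
        | x y y'. True}
   \<union> {Poly_Mapping.single (sX c x, y) 1 - fscale c (Poly_Mapping.single (x, y) 1) | c x y. True}
   \<union> {Poly_Mapping.single (x, sY c y) 1 - fscale c (Poly_Mapping.single (x, y) 1) | c x y. True}"

definition teq2 :: "('k::field \<Rightarrow> 'x::ab_group_add \<Rightarrow> 'x) \<Rightarrow> ('k \<Rightarrow> 'y::ab_group_add \<Rightarrow> 'y)
    \<Rightarrow> ('x \<times> 'y) list \<Rightarrow> ('x \<times> 'y) list \<Rightarrow> bool" where
  "teq2 sX sY xs ys \<longleftrightarrow>
     (tfree xs - tfree ys :: ('x \<times> 'y) \<Rightarrow>\<^sub>0 'k) \<in> module.span fscale (trel2 sX sY)"

definition trel3 :: "('k::field \<Rightarrow> 'x::ab_group_add \<Rightarrow> 'x) \<Rightarrow> ('k \<Rightarrow> 'y::ab_group_add \<Rightarrow> 'y)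
    \<Rightarrow> ('k \<Rightarrow> 'z::ab_group_add \<Rightarrow> 'z) \<Rightarrow> (('x \<times> 'y \<times> 'z) \<Rightarrow>\<^sub>0 'k) set" where
  "trel3 sX sY sZ =
     {Poly_Mapping.single (x + x', y, z) 1 - Poly_Mapping.single (x, y, z) 1
        - Poly_Mapping.single (x', y, z) 1 | x x' y z. True}
   \<union> {Poly_Mapping.single (x, y + y', z) 1 - Poly_Mapping.single (x, y, z) 1
        - Poly_Mapping.single (x, y', z) 1 | x y y' z. True}
   \<union> {Poly_Mapping.single (x, y, z + z') 1 - Poly_Mapping.single (x, y, z) 1
        - Poly_Mapping.single (x, y, z') 1 | x y z z'. True}
   \<union> {Poly_Mapping.single (sX c x, y, z) 1 - fscale c (Poly_Mapping.single (x, y, z) 1) | c x y z. True}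
   \<union> {Poly_Mapping.single (x, sY c y, z) 1 - fscale c (Poly_Mapping.single (x, y, z) 1) | c x y z. True}
   \<union> {Poly_Mapping.single (x, y, sZ c z) 1 - fscale c (Poly_Mapping.single (x, y, z) 1) | c x y z. True}"

definition teq3 :: "('k::field \<Rightarrow> 'x::ab_group_add \<Rightarrow> 'x) \<Rightarrow> ('k \<Rightarrow> 'y::ab_group_add \<Rightarrow> 'y)
    \<Rightarrow> ('k \<Rightarrow> 'z::ab_group_add \<Rightarrow> 'z)
    \<Rightarrow> ('x \<times> 'y \<times> 'z) list \<Rightarrow> ('x \<times> 'y \<times> 'z) list \<Rightarrow> bool" where
  "teq3 sX sY sZ xs ys \<longleftrightarrow>
     (tfree xs - tfree ys :: ('x \<times> 'y \<times> 'z) \<Rightarrow>\<^sub>0 'k) \<in> module.span fscale (trel3 sX sY sZ)"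

text \<open>The coproduct \<open>\<Delta> : H \<rightarrow> H \<otimes> H\<close> is given by a representative
  \<open>sw h = [(h_1,h_2), ...]\<close> (Sweedler notation \<open>\<Delta>(h) = h_1 \<otimes> h_2\<close>);
  \<open>eps\<close> is the counit and \<open>S\<close> the antipode.\<close>

definition hopf_algebra :: "('k::field \<Rightarrow> 'h::ring_1 \<Rightarrow> 'h) \<Rightarrow> ('h \<Rightarrow> ('h \<times> 'h) list)
    \<Rightarrow> ('h \<Rightarrow> 'k) \<Rightarrow> ('h \<Rightarrow> 'h) \<Rightarrow> bool" where
  "hopf_algebra sc sw eps S \<longleftrightarrow>
     k_algebra sc \<and>
     \<comment> \<open>\<Delta> is k-linear\<close>
     (\<forall>x y. teq2 sc sc (sw (x + y)) (sw x @ sw y)) \<and>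
     (\<forall>c x. teq2 sc sc (sw (sc c x)) (map (\<lambda>(a, b). (sc c a, b)) (sw x))) \<and>
     \<comment> \<open>coassociativity\<close>
     (\<forall>h. teq3 sc sc sc
            (concat (map (\<lambda>(a, b). map (\<lambda>(a1, a2). (a1, a2, b)) (sw a)) (sw h)))
            (concat (map (\<lambda>(a, b). map (\<lambda>(b1, b2). (a, b1, b2)) (sw b)) (sw h)))) \<and>
     \<comment> \<open>counit\<close>
     Vector_Spaces.linear sc (*) eps \<and>
     (\<forall>h. sum_list (map (\<lambda>(a, b). sc (eps a) b) (sw h)) = h) \<and>
     (\<forall>h. sum_list (map (\<lambda>(a, b). sc (eps b) a) (sw h)) = h) \<and>
     \<comment> \<open>\<Delta> and \<open>eps\<close> are algebra maps\<close>
     (\<forall>x y. teq2 sc sc (sw (x * y))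
              (concat (map (\<lambda>(a, b). map (\<lambda>(c, d). (a * c, b * d)) (sw y)) (sw x)))) \<and>
     teq2 sc sc (sw 1) [(1, 1)] \<and>
     (\<forall>x y. eps (x * y) = eps x * eps y) \<and> eps 1 = 1 \<and>
     \<comment> \<open>antipode\<close>
     Vector_Spaces.linear sc sc S \<and>
     (\<forall>h. sum_list (map (\<lambda>(a, b). S a * b) (sw h)) = sc (eps h) 1) \<and>
     (\<forall>h. sum_list (map (\<lambda>(a, b). a * S b) (sw h)) = sc (eps h) 1)"

definition cocommutative :: "('k::field \<Rightarrow> 'h::ring_1 \<Rightarrow> 'h) \<Rightarrow> ('h \<Rightarrow> ('h \<times> 'h) list) \<Rightarrow> bool" where
  "cocommutative sc sw \<longleftrightarrow> (\<forall>h. teq2 sc sc (sw h) (map prod.swap (sw h)))"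

definition bimodule_algebra :: "('k::field \<Rightarrow> 'h::ring_1 \<Rightarrow> 'h) \<Rightarrow> ('h \<Rightarrow> ('h \<times> 'h) list)
    \<Rightarrow> ('h \<Rightarrow> 'k) \<Rightarrow> ('k \<Rightarrow> 'a::ring_1 \<Rightarrow> 'a)
    \<Rightarrow> ('h \<Rightarrow> 'a \<Rightarrow> 'a) \<Rightarrow> ('a \<Rightarrow> 'h \<Rightarrow> 'a) \<Rightarrow> bool" where
  "bimodule_algebra scH sw eps scA lact ract \<longleftrightarrow>
     k_algebra scA \<and>
     \<comment> \<open>bilinearity of the actions\<close>
     (\<forall>h. Vector_Spaces.linear scA scA (lact h)) \<and>
     (\<forall>a. Vector_Spaces.linear scH scA (\<lambda>h. lact h a)) \<and>
     (\<forall>h. Vector_Spaces.linear scA scA (\<lambda>a. ract a h)) \<and>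
     (\<forall>a. Vector_Spaces.linear scH scA (ract a)) \<and>
     \<comment> \<open>H-bimodule\<close>
     (\<forall>x y a. lact (x * y) a = lact x (lact y a)) \<and> (\<forall>a. lact 1 a = a) \<and>
     (\<forall>x y a. ract a (x * y) = ract (ract a x) y) \<and> (\<forall>a. ract a 1 = a) \<and>
     (\<forall>x y a. ract (lact x a) y = lact x (ract a y)) \<and>
     \<comment> \<open>compatibility with the algebra structure\<close>
     (\<forall>h a b. lact h (a * b) = sum_list (map (\<lambda>(h1, h2). lact h1 a * lact h2 b) (sw h))) \<and>
     (\<forall>h a b. ract (a * b) h = sum_list (map (\<lambda>(h1, h2). ract a h1 * ract b h2) (sw h))) \<and>
     (\<forall>h. lact h 1 = scA (eps h) 1) \<and>
     (\<forall>h. ract 1 h = scA (eps h) 1)"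

definition left_module_algebra :: "('k::field \<Rightarrow> 'h::ring_1 \<Rightarrow> 'h) \<Rightarrow> ('h \<Rightarrow> ('h \<times> 'h) list)
    \<Rightarrow> ('h \<Rightarrow> 'k) \<Rightarrow> ('k \<Rightarrow> 'a::ring_1 \<Rightarrow> 'a) \<Rightarrow> ('h \<Rightarrow> 'a \<Rightarrow> 'a) \<Rightarrow> bool" where
  "left_module_algebra scH sw eps scA act \<longleftrightarrow>
     k_algebra scA \<and>
     (\<forall>h. Vector_Spaces.linear scA scA (act h)) \<and>
     (\<forall>a. Vector_Spaces.linear scH scA (\<lambda>h. act h a)) \<and>
     (\<forall>x y a. act (x * y) a = act x (act y a)) \<and> (\<forall>a. act 1 a = a) \<and>
     (\<forall>h a b. act h (a * b) = sum_list (map (\<lambda>(h1, h2). act h1 a * act h2 b) (sw h))) \<and>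
     (\<forall>h. act h 1 = scA (eps h) 1)"

definition conj_action :: "('h \<Rightarrow> ('h \<times> 'h) list) \<Rightarrow> ('h \<Rightarrow> 'h)
    \<Rightarrow> ('h \<Rightarrow> 'a \<Rightarrow> 'a) \<Rightarrow> ('a \<Rightarrow> 'h \<Rightarrow> 'a) \<Rightarrow> 'h \<Rightarrow> 'a::ab_group_add \<Rightarrow> 'a" where
  "conj_action sw S lact ract h a = sum_list (map (\<lambda>(h1, h2). ract (lact h1 a) (S h2)) (sw h))"

text \<open>L-R-smash product:
  \<open>(\<phi> \<natural> h)(\<psi> \<natural> h') = (\<phi> \<cdot> h'_2)(h_1 \<cdot> \<psi>) \<natural> h_2 h'_1\<close>, extended bilinearly.\<close>
definition lr_smash_mult :: "('h \<Rightarrow> ('h \<times> 'h) list) \<Rightarrow> ('h \<Rightarrow> 'a \<Rightarrow> 'a) \<Rightarrow> ('a \<Rightarrow> 'h \<Rightarrow> 'a)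
    \<Rightarrow> ('a::times \<times> 'h::times) list \<Rightarrow> ('a \<times> 'h) list \<Rightarrow> ('a \<times> 'h) list" where
  "lr_smash_mult sw lact ract xs ys =
     concat (map (\<lambda>(\<phi>, h). concat (map (\<lambda>(\<psi>, h'). concat (map (\<lambda>(h1, h2).
        map (\<lambda>(h'1, h'2). (ract \<phi> h'2 * lact h1 \<psi>, h2 * h'1)) (sw h')) (sw h))) ys)) xs)"

text \<open>Smash product: \<open>(\<phi> # h)(\<phi>' # h') = \<phi> (h_1 \<rightarrow> \<phi>') # h_2 h'\<close>, extended bilinearly.\<close>
definition smash_mult :: "('h \<Rightarrow> ('h \<times> 'h) list) \<Rightarrow> ('h \<Rightarrow> 'a \<Rightarrow> 'a)
    \<Rightarrow> ('a::times \<times> 'h::times) list \<Rightarrow> ('a \<times> 'h) list \<Rightarrow> ('a \<times> 'h) list" where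
  "smash_mult sw act xs ys =
     concat (map (\<lambda>(\<phi>, h). concat (map (\<lambda>(\<phi>', h').
        map (\<lambda>(h1, h2). (\<phi> * act h1 \<phi>', h2 * h')) (sw h)) ys)) xs)"

definition tensor_alg_iso :: "('k::field \<Rightarrow> 'a::ring_1 \<Rightarrow> 'a) \<Rightarrow> ('k \<Rightarrow> 'h::ring_1 \<Rightarrow> 'h)
    \<Rightarrow> (('a \<times> 'h) list \<Rightarrow> ('a \<times> 'h) list \<Rightarrow> ('a \<times> 'h) list)
    \<Rightarrow> (('a \<times> 'h) list \<Rightarrow> ('a \<times> 'h) list \<Rightarrow> ('a \<times> 'h) list)
    \<Rightarrow> (('a \<times> 'h) list \<Rightarrow> ('a \<times> 'h) list) \<Rightarrow> bool" where
  "tensor_alg_iso scA scH m1 m2 \<Phi> \<longleftrightarrow>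
     (\<forall>xs ys. teq2 scA scH xs ys \<longrightarrow> teq2 scA scH (\<Phi> xs) (\<Phi> ys)) \<and>
     (\<forall>xs ys. teq2 scA scH (\<Phi> (xs @ ys)) (\<Phi> xs @ \<Phi> ys)) \<and>
     (\<forall>c xs. teq2 scA scH (\<Phi> (map (\<lambda>(a, h). (scA c a, h)) xs))
                           (map (\<lambda>(a, h). (scA c a, h)) (\<Phi> xs))) \<and>
     (\<forall>xs ys. teq2 scA scH (\<Phi> xs) (\<Phi> ys) \<longrightarrow> teq2 scA scH xs ys) \<and>
     (\<forall>ys. \<exists>xs. teq2 scA scH (\<Phi> xs) ys) \<and>
     (\<forall>xs ys. teq2 scA scH (\<Phi> (m1 xs ys)) (m2 (\<Phi> xs) (\<Phi> ys))) \<and>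
     teq2 scA scH (\<Phi> [(1, 1)]) [(1, 1)]"

end

theory Submission
  imports Defs
begin

definition lin :: "('k::field \<Rightarrow> 'x::ab_group_add \<Rightarrow> 'x) \<Rightarrow> ('k \<Rightarrow> 'v::ab_group_add \<Rightarrow> 'v) \<Rightarrow> ('x \<Rightarrow> 'v) \<Rightarrow> bool" where
  "lin s1 s2 f \<longleftrightarrow> (\<forall>x y. f (x + y) = f x + f y) \<and> (\<forall>c x. f (s1 c x) = s2 c (f x))"

lemma lin_add: "lin s1 s2 f \<Longrightarrow> f (x + y) = f x + f y" by (simp add: lin_def)
lemma lin_scale: "lin s1 s2 f \<Longrightarrow> f (s1 c x) = s2 c (f x)" by (simp add: lin_def)
lemma lin_zero: "lin s1 s2 f \<Longrightarrow> f 0 = 0"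
  using lin_add[of s1 s2 f 0 0] by simp
lemma lin_minus: "lin s1 s2 f \<Longrightarrow> f (x - y) = f x - f y"
  using lin_add[of s1 s2 f "x - y" y] by (simp add: algebra_simps)
lemma lin_uminus: "lin s1 s2 f \<Longrightarrow> f (- x) = - f x"
  using lin_minus[of s1 s2 f 0 x] by (simp add: lin_zero)
lemma lin_sum_list: "lin s1 s2 f \<Longrightarrow> f (sum_list (map g xs)) = sum_list (map (\<lambda>x. f (g x)) xs)"
  by (induction xs) (auto simp: lin_zero lin_add)

lemma vs_field: "vector_space ((*) :: 'k::field \<Rightarrow> 'k \<Rightarrow> 'k)"
  by unfold_locales (auto simp: algebra_simps)

lemma fscale_lookup: "Poly_Mapping.lookup (fscale c p) z = c * Poly_Mapping.lookup p z"
  unfolding fscale_def by transfer (auto simp: when_def)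

lemma fscale_vs: "vector_space (fscale :: 'k::field \<Rightarrow> ('i \<Rightarrow>\<^sub>0 'k) \<Rightarrow> _)"
  by unfold_locales (auto intro!: poly_mapping_eqI simp: fscale_lookup lookup_add algebra_simps)

lemma fscale_module: "module (fscale :: 'k::field \<Rightarrow> ('i \<Rightarrow>\<^sub>0 'k) \<Rightarrow> _)"
  using fscale_vs by (simp add: module_iff_vector_space)

lemma keys_fscale: "Poly_Mapping.keys (fscale c p) \<subseteq> Poly_Mapping.keys p"
  by (auto simp: in_keys_iff fscale_lookup)

definition Lmap :: "('i \<Rightarrow> 'v) \<Rightarrow> ('k::field \<Rightarrow> 'v::ab_group_add \<Rightarrow> 'v) \<Rightarrow> ('i \<Rightarrow>\<^sub>0 'k) \<Rightarrow> 'v" where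
  "Lmap G sV p = (\<Sum>z\<in>Poly_Mapping.keys p. sV (Poly_Mapping.lookup p z) (G z))"

context
  fixes sV :: "'k::field \<Rightarrow> 'v::ab_group_add \<Rightarrow> 'v" and G :: "'i \<Rightarrow> 'v"
  assumes vsV: "vector_space sV"
begin

lemma mV: "module sV" using vsV by (simp add: module_iff_vector_space)

lemma Lmap_super:
  assumes "finite K" "Poly_Mapping.keys p \<subseteq> K"
  shows "Lmap G sV p = (\<Sum>z\<in>K. sV (Poly_Mapping.lookup p z) (G z))"
  unfolding Lmap_def
  apply (rule sum.mono_neutral_left[OF assms(1) assms(2)])
  using module.scale_zero_left[OF mV] by (auto simp: in_keys_iff)

lemma Lmap_add: "Lmap G sV (p + q) = Lmap G sV p + Lmap G sV q"
proof -
  let ?K = "Poly_Mapping.keys p \<union> Poly_Mapping.keys q"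
  have f: "finite ?K" by simp
  have "Poly_Mapping.keys (p + q) \<subseteq> ?K" by (rule keys_add)
  then have "Lmap G sV (p + q) = (\<Sum>z\<in>?K. sV (Poly_Mapping.lookup (p+q) z) (G z))" by (rule Lmap_super[OF f])
  also have "\<dots> = (\<Sum>z\<in>?K. sV (Poly_Mapping.lookup p z) (G z)) + (\<Sum>z\<in>?K. sV (Poly_Mapping.lookup q z) (G z))"
    by (simp add: lookup_add module.scale_left_distrib[OF mV] sum.distrib)
  also have "\<dots> = Lmap G sV p + Lmap G sV q"
    by (simp add: Lmap_super[OF f])
  finally show ?thesis .
qed

lemma Lmap_fscale: "Lmap G sV (fscale c p) = sV c (Lmap G sV p)"
proof -
  have "Lmap G sV (fscale c p) = (\<Sum>z\<in>Poly_Mapping.keys p. sV (Poly_Mapping.lookup (fscale c p) z) (G z))"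
    by (rule Lmap_super) (auto simp: keys_fscale)
  also have "\<dots> = sV c (Lmap G sV p)"
    unfolding Lmap_def
    by (simp add: fscale_lookup module.scale_sum_right[OF mV] module.scale_scale[OF mV])
  finally show ?thesis .
qed

lemma Lmap_lin: "lin fscale sV (Lmap G sV)"
  by (simp add: lin_def Lmap_add Lmap_fscale)

lemma Lmap_single: "Lmap G sV (Poly_Mapping.single z 1) = G z"
  unfolding Lmap_def by (simp add: module.scale_one[OF mV])

lemma Lmap_tfree: "Lmap G sV (tfree xs) = sum_list (map G xs)"
  unfolding tfree_def
  by (induction xs) (auto simp: Lmap_add Lmap_single lin_zero[OF Lmap_lin])

lemma Lmap_span:
  assumes "\<And>r. r \<in> R \<Longrightarrow> Lmap G sV r = 0" "p \<in> module.span fscale R"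
  shows "Lmap G sV p = 0"
  using assms(2)
  apply (rule module.span_induct_alt[OF fscale_module, of p R])
  using assms(1) by (auto simp: lin_zero[OF Lmap_lin] Lmap_add Lmap_fscale module.scale_zero_right[OF mV])

end

definition bil where
  "bil s1 s2 s3 G \<longleftrightarrow> (\<forall>y. lin s1 s3 (\<lambda>x. G x y)) \<and> (\<forall>x. lin s2 s3 (G x))"

lemma teq2_sum:
  assumes vsV: "vector_space sV" and G: "bil sX sY sV G" and eq: "teq2 sX sY xs ys"
  shows "sum_list (map (\<lambda>(x, y). G x y) xs) = sum_list (map (\<lambda>(x, y). G x y) ys)"
proof -
  let ?L = "Lmap (\<lambda>(x, y). G x y) sV"
  have G1: "\<And>y. lin sX sV (\<lambda>x. G x y)" and G2: "\<And>x. lin sY sV (G x)" using G by (auto simp: bil_def)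
  have LS: "?L (Poly_Mapping.single (x, y) 1) = G x y" for x y by (simp add: Lmap_single[OF vsV])
  note LL = Lmap_lin[OF vsV, of "\<lambda>(x, y). G x y"]
  have r1: "?L (Poly_Mapping.single (x + x', y) 1 - Poly_Mapping.single (x, y) 1 - Poly_Mapping.single (x', y) 1) = 0" for x x' y
    apply (simp only: lin_minus[OF LL] LS)
    apply (simp only: lin_add[OF G1])
    apply simp
    done
  have r2: "?L (Poly_Mapping.single (x, y + y') 1 - Poly_Mapping.single (x, y) 1 - Poly_Mapping.single (x, y') 1) = 0" for x y y'
    apply (simp only: lin_minus[OF LL] LS)
    apply (simp only: lin_add[OF G2])
    apply simp
    done
  have r3: "?L (Poly_Mapping.single (sX c x, y) 1 - fscale c (Poly_Mapping.single (x, y) 1)) = 0" for c x y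
    apply (simp only: lin_minus[OF LL] LS Lmap_fscale[OF vsV])
    apply (simp only: lin_scale[OF G1])
    apply simp
    done
  have r4: "?L (Poly_Mapping.single (x, sY c y) 1 - fscale c (Poly_Mapping.single (x, y) 1)) = 0" for c x y
    apply (simp only: lin_minus[OF LL] LS Lmap_fscale[OF vsV])
    apply (simp only: lin_scale[OF G2])
    apply simp
    done
  have "?L r = 0" if "r \<in> trel2 sX sY" for r
    using that unfolding trel2_def
    apply (elim UnE)
    apply (erule CollectE, elim exE conjE, simp only: r1)
    apply (erule CollectE, elim exE conjE, simp only: r2)
    apply (erule CollectE, elim exE conjE, simp only: r3)
    apply (erule CollectE, elim exE conjE, simp only: r4)
    done
  then have "?L (tfree xs - tfree ys) = 0"
    using eq unfolding teq2_def by (rule Lmap_span[OF vsV])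
  then show ?thesis
    by (simp add: lin_minus[OF Lmap_lin[OF vsV]] Lmap_tfree[OF vsV])
qed

definition tril where
  "tril s1 s2 s3 s4 G \<longleftrightarrow> (\<forall>y z. lin s1 s4 (\<lambda>x. G x y z)) \<and> (\<forall>x z. lin s2 s4 (\<lambda>y. G x y z))
     \<and> (\<forall>x y. lin s3 s4 (G x y))"

lemma teq3_sum:
  assumes vsV: "vector_space sV" and G: "tril sX sY sZ sV G" and eq: "teq3 sX sY sZ xs ys"
  shows "sum_list (map (\<lambda>(x, y, z). G x y z) xs) = sum_list (map (\<lambda>(x, y, z). G x y z) ys)"
proof -
  let ?L = "Lmap (\<lambda>(x, y, z). G x y z) sV"
  have G1: "\<And>y z. lin sX sV (\<lambda>x. G x y z)" and G2: "\<And>x z. lin sY sV (\<lambda>y. G x y z)"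
    and G3: "\<And>x y. lin sZ sV (G x y)" using G by (auto simp: tril_def)
  have LS: "?L (Poly_Mapping.single (x, y, z) 1) = G x y z" for x y z by (simp add: Lmap_single[OF vsV])
  note LL = Lmap_lin[OF vsV, of "\<lambda>(x, y, z). G x y z"]
  have r1: "?L (Poly_Mapping.single (x + x', y, z) 1 - Poly_Mapping.single (x, y, z) 1
        - Poly_Mapping.single (x', y, z) 1) = 0" for x x' y z
    apply (simp only: lin_minus[OF LL] LS)
    apply (simp only: lin_add[OF G1])
    apply simp
    done
  have r2: "?L (Poly_Mapping.single (x, y + y', z) 1 - Poly_Mapping.single (x, y, z) 1
        - Poly_Mapping.single (x, y', z) 1) = 0" for x y y' z
    apply (simp only: lin_minus[OF LL] LS)
    apply (simp only: lin_add[OF G2])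
    apply simp
    done
  have r3: "?L (Poly_Mapping.single (x, y, z + z') 1 - Poly_Mapping.single (x, y, z) 1
        - Poly_Mapping.single (x, y, z') 1) = 0" for x y z z'
    apply (simp only: lin_minus[OF LL] LS)
    apply (simp only: lin_add[OF G3])
    apply simp
    done
  have r4: "?L (Poly_Mapping.single (sX c x, y, z) 1 - fscale c (Poly_Mapping.single (x, y, z) 1)) = 0" for c x y z
    apply (simp only: lin_minus[OF LL] LS Lmap_fscale[OF vsV])
    apply (simp only: lin_scale[OF G1])
    apply simp
    done
  have r5: "?L (Poly_Mapping.single (x, sY c y, z) 1 - fscale c (Poly_Mapping.single (x, y, z) 1)) = 0" for c x y z
    apply (simp only: lin_minus[OF LL] LS Lmap_fscale[OF vsV])
    apply (simp only: lin_scale[OF G2])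
    apply simp
    done
  have r6: "?L (Poly_Mapping.single (x, y, sZ c z) 1 - fscale c (Poly_Mapping.single (x, y, z) 1)) = 0" for c x y z
    apply (simp only: lin_minus[OF LL] LS Lmap_fscale[OF vsV])
    apply (simp only: lin_scale[OF G3])
    apply simp
    done
  have "?L r = 0" if "r \<in> trel3 sX sY sZ" for r
    using that unfolding trel3_def
    apply (elim UnE)
    apply (erule CollectE, elim exE conjE, simp only: r1)
    apply (erule CollectE, elim exE conjE, simp only: r2)
    apply (erule CollectE, elim exE conjE, simp only: r3)
    apply (erule CollectE, elim exE conjE, simp only: r4)
    apply (erule CollectE, elim exE conjE, simp only: r5)
    apply (erule CollectE, elim exE conjE, simp only: r6)
    done
  then have "?L (tfree xs - tfree ys) = 0"
    using eq unfolding teq3_def by (rule Lmap_span[OF vsV])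
  then show ?thesis
    by (simp add: lin_minus[OF Lmap_lin[OF vsV]] Lmap_tfree[OF vsV])
qed

lemma lin_tfree:
  assumes "lin fscale s g"
  shows "g (tfree xs) = sum_list (map (\<lambda>z. g (Poly_Mapping.single z 1)) xs)"
  unfolding tfree_def by (induction xs) (auto simp: lin_zero[OF assms] lin_add[OF assms])

lemma linear_lin: "Vector_Spaces.linear s1 s2 f \<Longrightarrow> lin s1 s2 f"
  by (simp add: Vector_Spaces.linear_iff lin_def)

lemma teq2I:
  fixes sX :: "'k::field \<Rightarrow> 'x::ab_group_add \<Rightarrow> 'x" and sY :: "'k \<Rightarrow> 'y::ab_group_add \<Rightarrow> 'y"
  assumes H: "\<And>\<beta>. bil sX sY ((*) :: 'k \<Rightarrow> 'k \<Rightarrow> 'k) \<beta> \<Longrightarrow>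
      sum_list (map (\<lambda>(x, y). \<beta> x y) xs) = sum_list (map (\<lambda>(x, y). \<beta> x y) ys)"
  shows "teq2 sX sY xs ys"
proof (rule ccontr)
  define v :: "('x \<times> 'y) \<Rightarrow>\<^sub>0 'k" where "v = tfree xs - tfree ys"
  define R where "R = (trel2 sX sY :: (('x \<times> 'y) \<Rightarrow>\<^sub>0 'k) set)"
  assume "\<not> teq2 sX sY xs ys"
  then have vR: "v \<notin> module.span fscale R" unfolding teq2_def v_def R_def by simp
  interpret F: vector_space "fscale :: 'k \<Rightarrow> (('x \<times> 'y) \<Rightarrow>\<^sub>0 'k) \<Rightarrow> _" by (rule fscale_vs)
  interpret P: vector_space_pair "fscale :: 'k \<Rightarrow> (('x \<times> 'y) \<Rightarrow>\<^sub>0 'k) \<Rightarrow> _" "(*) :: 'k \<Rightarrow> 'k \<Rightarrow> 'k"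
    using fscale_vs vs_field by (simp add: vector_space_pair_def)
  obtain B where B: "B \<subseteq> R" "F.independent B" "R \<subseteq> F.span B"
    by (rule F.maximal_independent_subset)
  have spR: "F.span R \<subseteq> F.span B"
    using B(3) by (metis F.span_mono F.span_span)
  have vB: "v \<notin> F.span B" using vR spR B(1) F.span_mono by blast
  have ind: "F.independent (insert v B)" using F.independent_insertI[OF vB B(2)] .
  obtain g where g: "Vector_Spaces.linear fscale (*) g" "\<forall>x\<in>insert v B. g x = (if x = v then 1 else 0)"
    using P.linear_independent_extend[OF ind, of "\<lambda>x. if x = v then 1 else 0"] by blast
  have gl: "lin fscale (*) g" using g(1) by (rule linear_lin)
  have gB: "g x = 0" if "x \<in> F.span B" for x
    using that
    apply (induction rule: F.span_induct_alt)
    using g(2) vB F.span_base by (auto simp: lin_zero[OF gl] lin_add[OF gl] lin_scale[OF gl])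
  have gR: "g r = 0" if "r \<in> R" for r using gB B(3) that by blast
  define \<beta> where "\<beta> x y = g (Poly_Mapping.single (x, y) 1)" for x y
  have rel: "\<And>r. r \<in> trel2 sX sY \<Longrightarrow> g r = 0" using gR R_def by simp
  have b1: "lin sX (*) (\<lambda>x. \<beta> x y)" for y
  proof -
    have a: "\<beta> (x + x') y = \<beta> x y + \<beta> x' y" for x x'
    proof -
      have "g (Poly_Mapping.single (x + x', y) 1 - Poly_Mapping.single (x, y) 1 - Poly_Mapping.single (x', y) 1) = 0"
        by (rule rel) (unfold trel2_def, blast)
      then show ?thesis unfolding \<beta>_def by (simp add: lin_minus[OF gl] diff_eq_eq add.commute)
    qed
    have s: "\<beta> (sX c x) y = c * \<beta> x y" for c x
    proof -
      have "g (Poly_Mapping.single (sX c x, y) 1 - fscale c (Poly_Mapping.single (x, y) 1)) = 0"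
        by (rule rel) (unfold trel2_def, blast)
      then show ?thesis unfolding \<beta>_def by (simp add: lin_minus[OF gl] lin_scale[OF gl])
    qed
    show ?thesis using a s by (simp add: lin_def)
  qed
  have b2: "lin sY (*) (\<beta> x)" for x
  proof -
    have a: "\<beta> x (y + y') = \<beta> x y + \<beta> x y'" for y y'
    proof -
      have "g (Poly_Mapping.single (x, y + y') 1 - Poly_Mapping.single (x, y) 1 - Poly_Mapping.single (x, y') 1) = 0"
        by (rule rel) (unfold trel2_def, blast)
      then show ?thesis unfolding \<beta>_def by (simp add: lin_minus[OF gl] diff_eq_eq add.commute)
    qed
    have s: "\<beta> x (sY c y) = c * \<beta> x y" for c y
    proof -
      have "g (Poly_Mapping.single (x, sY c y) 1 - fscale c (Poly_Mapping.single (x, y) 1)) = 0"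
        by (rule rel) (unfold trel2_def, blast)
      then show ?thesis unfolding \<beta>_def by (simp add: lin_minus[OF gl] lin_scale[OF gl])
    qed
    show ?thesis using a s by (simp add: lin_def)
  qed
  have "bil sX sY (*) \<beta>" using b1 b2 by (simp add: bil_def)
  from H[OF this] have "g (tfree xs) = g (tfree ys)"
    unfolding lin_tfree[OF gl] \<beta>_def by (simp add: split_def)
  then have "g v = 0" unfolding v_def by (simp add: lin_minus[OF gl])
  moreover have "g v = 1" using g(2) by simp
  ultimately show False by simp
qed

lemma sum_list_concat_map:
  "sum_list (map f (concat (map g xs))) = sum_list (map (\<lambda>x. sum_list (map f (g x))) xs)"
  by (induction xs) auto

lemma sum_list_swap:
  "(sum_list (map (\<lambda>x. sum_list (map (\<lambda>y. f x y) ys)) xs) :: 'v::comm_monoid_add)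
   = sum_list (map (\<lambda>y. sum_list (map (\<lambda>x. f x y) xs)) ys)"
  by (induction xs) (simp_all add: sum_list_addf)

definition swsum :: "('h \<Rightarrow> ('h \<times> 'h) list) \<Rightarrow> 'h \<Rightarrow> ('h \<Rightarrow> 'h \<Rightarrow> 'v::comm_monoid_add) \<Rightarrow> 'v" where
  "swsum sw h F = sum_list (map (\<lambda>(a, b). F a b) (sw h))"

fun cop :: "('h \<Rightarrow> ('h \<times> 'h) list) \<Rightarrow> nat \<Rightarrow> 'h \<Rightarrow> 'h list list" where
  "cop sw 0 h = [[h]]"
| "cop sw (Suc n) h = concat (map (\<lambda>(a, b). map ((#) a) (cop sw n b)) (sw h))"

definition csum :: "('h \<Rightarrow> ('h \<times> 'h) list) \<Rightarrow> nat \<Rightarrow> 'h \<Rightarrow> ('h list \<Rightarrow> 'v::comm_monoid_add) \<Rightarrow> 'v" where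
  "csum sw n h G = sum_list (map G (cop sw n h))"

lemma csum_0: "csum sw 0 h G = G [h]"
  by (simp add: csum_def)

lemma csum_Suc: "csum sw (Suc n) h G = swsum sw h (\<lambda>a b. csum sw n b (\<lambda>t. G (a # t)))"
  by (simp add: csum_def swsum_def sum_list_concat_map split_def o_def)

lemma cop_length: "t \<in> set (cop sw n h) \<Longrightarrow> length t = Suc n"
  by (induction n arbitrary: h t) auto

lemma csum_cong: "(\<And>t. length t = Suc n \<Longrightarrow> F t = G t) \<Longrightarrow> csum sw n h F = csum sw n h G"
  unfolding csum_def by (rule arg_cong[where f=sum_list], rule map_cong) (auto dest: cop_length)

lemma swsum_swap:
  "swsum sw h (\<lambda>a b. swsum sw g (\<lambda>c d. F a b c d)) = swsum sw g (\<lambda>c d. swsum sw h (\<lambda>a b. F a b c d))"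
  unfolding swsum_def using sum_list_swap[of "\<lambda>x y. F (fst x) (snd x) (fst y) (snd y)"]
  by (simp add: split_def)

lemma csum_swsum_swap:
  "csum sw n h (\<lambda>t. swsum sw g (F t)) = swsum sw g (\<lambda>c d. csum sw n h (\<lambda>t. F t c d))"
  unfolding swsum_def csum_def using sum_list_swap[of "\<lambda>x y. F x (fst y) (snd y)"]
  by (simp add: split_def)

lemma csum_csum_swap:
  "csum sw n h (\<lambda>t. csum sw m g (F t)) = csum sw m g (\<lambda>u. csum sw n h (\<lambda>t. F t u))"
  unfolding csum_def using sum_list_swap[of F] by simp

lemma swsum_add: "swsum sw h (\<lambda>a b. F a b + G a b) = swsum sw h F + swsum sw h G"
  unfolding swsum_def by (simp add: split_def sum_list_addf)

lemma csum_add: "csum sw n h (\<lambda>t. F t + G t) = csum sw n h F + csum sw n h G"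
  unfolding csum_def by (simp add: sum_list_addf)

lemma swsum_lin: "lin s1 s2 f \<Longrightarrow> f (swsum sw h F) = swsum sw h (\<lambda>a b. f (F a b))"
  unfolding swsum_def by (simp add: lin_sum_list split_def)

lemma csum_lin: "lin s1 s2 f \<Longrightarrow> f (csum sw n h F) = csum sw n h (\<lambda>t. f (F t))"
  unfolding csum_def by (simp add: lin_sum_list)

lemma swsum_0: "swsum sw h (\<lambda>a b. 0) = 0"
  unfolding swsum_def by (induction "sw h") auto

lemma csum_0f: "csum sw n h (\<lambda>t. 0) = 0"
  unfolding csum_def by (induction "cop sw n h") auto

lemma lin_id: "lin s s (\<lambda>x. x)" by (simp add: lin_def)

lemma lin_addf: "vector_space s2 \<Longrightarrow> lin s1 s2 f \<Longrightarrow> lin s1 s2 g \<Longrightarrow> lin s1 s2 (\<lambda>x. f x + g x)"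
  by (simp add: lin_def vector_space.vector_space_assms(1) algebra_simps)

lemma lin_sum_list_param:
  assumes "vector_space s2" "\<And>z. z \<in> set l \<Longrightarrow> lin s1 s2 (\<lambda>x. F x z)"
  shows "lin s1 s2 (\<lambda>x. sum_list (map (F x) l))"
  using assms(2)
proof (induction l)
  case Nil
  then show ?case using assms(1) by (simp add: lin_def module.scale_zero_right module_iff_vector_space)
next
  case (Cons a l)
  then show ?case using lin_addf[OF assms(1) Cons.prems[of a] Cons.IH] by simp
qed

lemma lin_swsum_param:
  "vector_space s2 \<Longrightarrow> (\<And>a b. lin s1 s2 (\<lambda>x. F x a b)) \<Longrightarrow> lin s1 s2 (\<lambda>x. swsum sw h (F x))"
  unfolding swsum_def by (rule lin_sum_list_param) (auto simp: split_def)

lemma lin_csum_param: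
  "vector_space s2 \<Longrightarrow> (\<And>t. length t = Suc n \<Longrightarrow> lin s1 s2 (\<lambda>x. F x t)) \<Longrightarrow> lin s1 s2 (\<lambda>x. csum sw n h (F x))"
  unfolding csum_def by (rule lin_sum_list_param) (auto dest: cop_length)

lemma lin_scale_right: "vector_space s2 \<Longrightarrow> lin s1 s2 f \<Longrightarrow> lin s1 s2 (\<lambda>x. s2 c (f x))"
  by (simp add: lin_def vector_space.vector_space_assms(1,3) mult.commute)

lemma lin_scale_left: "vector_space s2 \<Longrightarrow> lin s1 (*) f \<Longrightarrow> lin s1 s2 (\<lambda>x. s2 (f x) v)"
  by (simp add: lin_def vector_space.vector_space_assms(2,3))

lemma lin_mult_right: "lin s1 (*) f \<Longrightarrow> lin s1 (*) (\<lambda>x. f x * c)"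
  by (simp add: lin_def algebra_simps)

lemma lin_mult_left: "lin s1 (*) f \<Longrightarrow> lin s1 (*) (\<lambda>x. c * f x)"
  by (simp add: lin_def algebra_simps)

definition mlin :: "('k::field \<Rightarrow> 'h::ab_group_add \<Rightarrow> 'h) \<Rightarrow> ('k \<Rightarrow> 'v::ab_group_add \<Rightarrow> 'v) \<Rightarrow> nat
    \<Rightarrow> ('h list \<Rightarrow> 'v) \<Rightarrow> bool" where
  "mlin sH sV n G \<longleftrightarrow> (\<forall>t i. length t = Suc n \<longrightarrow> i \<le> n \<longrightarrow> lin sH sV (\<lambda>x. G (t[i := x])))"

lemma mlinD: "mlin sH sV n G \<Longrightarrow> length t = Suc n \<Longrightarrow> i \<le> n \<Longrightarrow> lin sH sV (\<lambda>x. G (t[i := x]))"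
  by (simp add: mlin_def)

lemma mlin_Cons:
  fixes G :: "'h::ab_group_add list \<Rightarrow> 'v::ab_group_add"
  shows "mlin sH sV (Suc n) G \<Longrightarrow> mlin sH sV n (\<lambda>t. G (a # t))"
  unfolding mlin_def
proof (intro allI impI)
  fix t :: "'h list" and i assume m: "\<forall>t i. length t = Suc (Suc n) \<longrightarrow> i \<le> Suc n \<longrightarrow> lin sH sV (\<lambda>x. G (t[i := x]))"
    and "length t = Suc n" "i \<le> n"
  then have "lin sH sV (\<lambda>x. G ((a # t)[Suc i := x]))" using m by (metis Suc_le_mono length_Cons)
  then show "lin sH sV (\<lambda>x. G (a # t[i := x]))" by simp
qed

lemma mlin_head: "mlin sH sV (Suc n) G \<Longrightarrow> length t = Suc n \<Longrightarrow> lin sH sV (\<lambda>x. G (x # t))"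
  using mlinD[of sH sV "Suc n" G "a # t" 0 for a] by simp

lemma mlin0I: "lin sH sV (\<lambda>x. G [x]) \<Longrightarrow> mlin sH sV 0 G"
  unfolding mlin_def by (auto simp: length_Suc_conv)

lemma mlin1I: "(\<And>b. lin sH sV (\<lambda>x. G [x, b])) \<Longrightarrow> (\<And>a. lin sH sV (\<lambda>x. G [a, x])) \<Longrightarrow> mlin sH sV 1 G"
  unfolding mlin_def by (auto simp: length_Suc_conv le_Suc_eq)

lemma mlin2I: "(\<And>b c. lin sH sV (\<lambda>x. G [x, b, c])) \<Longrightarrow> (\<And>a c. lin sH sV (\<lambda>x. G [a, x, c]))
   \<Longrightarrow> (\<And>a b. lin sH sV (\<lambda>x. G [a, b, x])) \<Longrightarrow> mlin sH sV 2 G"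
  unfolding mlin_def by (auto simp: length_Suc_conv le_Suc_eq numeral_2_eq_2)

lemma mlin3I: "(\<And>b c d. lin sH sV (\<lambda>x. G [x, b, c, d])) \<Longrightarrow> (\<And>a c d. lin sH sV (\<lambda>x. G [a, x, c, d]))
   \<Longrightarrow> (\<And>a b d. lin sH sV (\<lambda>x. G [a, b, x, d])) \<Longrightarrow> (\<And>a b c. lin sH sV (\<lambda>x. G [a, b, c, x]))
   \<Longrightarrow> mlin sH sV 3 G"
  unfolding mlin_def by (auto simp: length_Suc_conv le_Suc_eq numeral_3_eq_3)

lemma mlin4I: "(\<And>b c d e. lin sH sV (\<lambda>x. G [x, b, c, d, e])) \<Longrightarrow> (\<And>a c d e. lin sH sV (\<lambda>x. G [a, x, c, d, e]))
   \<Longrightarrow> (\<And>a b d e. lin sH sV (\<lambda>x. G [a, b, x, d, e])) \<Longrightarrow> (\<And>a b c e. lin sH sV (\<lambda>x. G [a, b, c, x, e]))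
   \<Longrightarrow> (\<And>a b c d. lin sH sV (\<lambda>x. G [a, b, c, d, x]))
   \<Longrightarrow> mlin sH sV 4 G"
  unfolding mlin_def by (auto simp: length_Suc_conv le_Suc_eq eval_nat_numeral)

lemma lin_comp: "lin s2 s3 g \<Longrightarrow> lin s1 s2 f \<Longrightarrow> lin s1 s3 (\<lambda>x. g (f x))"
  by (simp add: lin_def)

lemma lin_scale_self: "vector_space s \<Longrightarrow> lin s s (s c)"
  by (simp add: lin_def vector_space.vector_space_assms(1,3) mult.commute)

locale hopf =
  fixes scH :: "'k::field \<Rightarrow> 'h::ring_1 \<Rightarrow> 'h" and sw :: "'h \<Rightarrow> ('h \<times> 'h) list"
    and eps :: "'h \<Rightarrow> 'k" and S :: "'h \<Rightarrow> 'h"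
  assumes hopf: "hopf_algebra scH sw eps S" and cocom: "cocommutative scH sw"
begin

lemma kalg: "k_algebra scH" using hopf by (simp add: hopf_algebra_def)
lemma vsH: "vector_space scH" using kalg by (simp add: k_algebra_def)
lemma sc_multL: "scH c (x * y) = scH c x * y" using kalg unfolding k_algebra_def by metis
lemma sc_multR: "scH c (x * y) = x * scH c y" using kalg unfolding k_algebra_def by metis
lemma sw_add: "teq2 scH scH (sw (x + y)) (sw x @ sw y)" using hopf by (simp add: hopf_algebra_def)
lemma sw_scale: "teq2 scH scH (sw (scH c x)) (map (\<lambda>(a, b). (scH c a, b)) (sw x))"
  using hopf by (simp add: hopf_algebra_def)
lemma coass_teq: "teq3 scH scH scH
            (concat (map (\<lambda>(a, b). map (\<lambda>(a1, a2). (a1, a2, b)) (sw a)) (sw h)))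
            (concat (map (\<lambda>(a, b). map (\<lambda>(b1, b2). (a, b1, b2)) (sw b)) (sw h)))"
  using hopf by (simp add: hopf_algebra_def)
lemma eps_lin: "lin scH (*) eps" using hopf by (simp add: hopf_algebra_def linear_lin)
lemma counitL: "swsum sw h (\<lambda>a b. scH (eps a) b) = h"
  using hopf by (simp add: hopf_algebra_def swsum_def split_def)
lemma counitR: "swsum sw h (\<lambda>a b. scH (eps b) a) = h"
  using hopf by (simp add: hopf_algebra_def swsum_def split_def)
lemma sw_mult: "teq2 scH scH (sw (x * y))
              (concat (map (\<lambda>(a, b). map (\<lambda>(c, d). (a * c, b * d)) (sw y)) (sw x)))"
  using hopf by (simp add: hopf_algebra_def)
lemma sw_one: "teq2 scH scH (sw 1) [(1, 1)]" using hopf by (simp add: hopf_algebra_def)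
lemma eps_mult: "eps (x * y) = eps x * eps y" using hopf by (simp add: hopf_algebra_def)
lemma eps_one: "eps 1 = 1" using hopf by (simp add: hopf_algebra_def)
lemma S_lin: "lin scH scH S" using hopf by (simp add: hopf_algebra_def linear_lin)
lemma antipL: "swsum sw h (\<lambda>a b. S a * b) = scH (eps h) 1"
  using hopf by (simp add: hopf_algebra_def swsum_def split_def)
lemma antipR: "swsum sw h (\<lambda>a b. a * S b) = scH (eps h) 1"
  using hopf by (simp add: hopf_algebra_def swsum_def split_def)
lemma cocom_teq: "teq2 scH scH (sw h) (map prod.swap (sw h))"
  using cocom by (simp add: cocommutative_def)

lemma lin_multR: "lin s1 scH f \<Longrightarrow> lin s1 scH (\<lambda>x. f x * c)"
  by (simp add: lin_def distrib_right sc_multL)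
lemma lin_multL: "lin s1 scH f \<Longrightarrow> lin s1 scH (\<lambda>x. c * f x)"
  by (simp add: lin_def distrib_left sc_multR)
lemma lin_S: "lin s1 scH f \<Longrightarrow> lin s1 scH (\<lambda>x. S (f x))"
  using lin_comp[OF S_lin] .
lemma lin_eps: "lin s1 scH f \<Longrightarrow> lin s1 (*) (\<lambda>x. eps (f x))"
  using lin_comp[OF eps_lin] .

lemma swsum_arg_lin:
  assumes vsV: "vector_space sV" and F1: "\<And>b. lin scH sV (\<lambda>a. F a b)" and F2: "\<And>a. lin scH sV (F a)"
  shows "lin scH sV (\<lambda>h. swsum sw h F)"
proof -
  have B: "bil scH scH sV F" using F1 F2 by (simp add: bil_def)
  have "swsum sw (x + y) F = swsum sw x F + swsum sw y F" for x y
    unfolding swsum_def using teq2_sum[OF vsV B sw_add[of x y]] by simp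
  moreover have "swsum sw (scH c x) F = sV c (swsum sw x F)" for c x
  proof -
    have "swsum sw (scH c x) F = sum_list (map (\<lambda>(a, b). F (scH c a) b) (sw x))"
      unfolding swsum_def using teq2_sum[OF vsV B sw_scale[of c x]] by (simp add: o_def split_def)
    also have "\<dots> = swsum sw x (\<lambda>a b. sV c (F a b))"
      unfolding swsum_def by (simp add: lin_scale[OF F1] split_def)
    also have "\<dots> = sV c (swsum sw x F)"
      by (simp add: swsum_lin[OF lin_scale_self[OF vsV]])
    finally show ?thesis .
  qed
  ultimately show ?thesis by (simp add: lin_def)
qed

lemma lin_swsum_arg:
  "vector_space sV \<Longrightarrow> (\<And>b. lin scH sV (\<lambda>a. F a b)) \<Longrightarrow> (\<And>a. lin scH sV (F a)) \<Longrightarrow> lin s1 scH f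
   \<Longrightarrow> lin s1 sV (\<lambda>x. swsum sw (f x) F)"
  using lin_comp[OF swsum_arg_lin] by blast

lemma coass:
  assumes vsV: "vector_space sV" and G1: "\<And>y z. lin scH sV (\<lambda>x. G x y z)"
    and G2: "\<And>x z. lin scH sV (\<lambda>y. G x y z)" and G3: "\<And>x y. lin scH sV (G x y)"
  shows "swsum sw h (\<lambda>a b. swsum sw a (\<lambda>c d. G c d b)) = swsum sw h (\<lambda>a b. swsum sw b (\<lambda>c d. G a c d))"
proof -
  have T: "tril scH scH scH sV G" using G1 G2 G3 by (simp add: tril_def)
  show ?thesis using teq3_sum[OF vsV T coass_teq[of h]]
    by (simp add: swsum_def sum_list_concat_map split_def o_def)
qed

lemma cocomm:
  assumes vsV: "vector_space sV" and F1: "\<And>b. lin scH sV (\<lambda>a. F a b)" and F2: "\<And>a. lin scH sV (F a)"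
  shows "swsum sw h F = swsum sw h (\<lambda>a b. F b a)"
proof -
  have B: "bil scH scH sV F" using F1 F2 by (simp add: bil_def)
  show ?thesis using teq2_sum[OF vsV B cocom_teq[of h]]
    by (simp add: swsum_def split_def o_def)
qed

lemma sw_mult_sum:
  assumes vsV: "vector_space sV" and F1: "\<And>b. lin scH sV (\<lambda>a. F a b)" and F2: "\<And>a. lin scH sV (F a)"
  shows "swsum sw (x * y) F = swsum sw x (\<lambda>a b. swsum sw y (\<lambda>c d. F (a * c) (b * d)))"
proof -
  have B: "bil scH scH sV F" using F1 F2 by (simp add: bil_def)
  show ?thesis using teq2_sum[OF vsV B sw_mult[of x y]]
    by (simp add: swsum_def sum_list_concat_map split_def o_def)
qed

lemma sw_one_sum:
  assumes vsV: "vector_space sV" and F1: "\<And>b. lin scH sV (\<lambda>a. F a b)" and F2: "\<And>a. lin scH sV (F a)"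
  shows "swsum sw 1 F = F 1 1"
proof -
  have B: "bil scH scH sV F" using F1 F2 by (simp add: bil_def)
  show ?thesis using teq2_sum[OF vsV B sw_one]
    by (simp add: swsum_def)
qed

lemma csum_arg_lin:
  assumes vsV: "vector_space sV" and m: "mlin scH sV n G"
  shows "lin scH sV (\<lambda>h. csum sw n h G)"
  using m
proof (induction n arbitrary: G)
  case 0
  have "lin scH sV (\<lambda>x. G ([0][0 := x]))" by (rule mlinD[OF 0]) auto
  then show ?case by (simp add: csum_0)
next
  case (Suc n)
  show ?case unfolding csum_Suc
  proof (rule swsum_arg_lin[OF vsV])
    fix b show "lin scH sV (\<lambda>a. csum sw n b (\<lambda>t. G (a # t)))"
      by (rule lin_csum_param[OF vsV]) (rule mlin_head[OF Suc.prems])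
  next
    fix a show "lin scH sV (\<lambda>b. csum sw n b (\<lambda>t. G (a # t)))"
      by (rule Suc.IH, rule mlin_Cons[OF Suc.prems])
  qed
qed

lemma lin_csum_arg:
  "vector_space sV \<Longrightarrow> mlin scH sV n G \<Longrightarrow> lin s1 scH f \<Longrightarrow> lin s1 sV (\<lambda>x. csum sw n (f x) G)"
  using lin_comp[OF csum_arg_lin] by blast

lemma mlin_pos:
  assumes m: "mlin sH sV n G" and len: "length t = Suc n" and i: "i \<le> n"
    and eq: "\<And>x. F x = G (t[i := x])"
  shows "lin sH sV F"
proof -
  have "F = (\<lambda>x. G (t[i := x]))" using eq by auto
  then show ?thesis using mlinD[OF m len i] by simp
qed

lemma K2:
  assumes vsV: "vector_space sV" and m: "mlin scH sV (Suc n) G" and i: "i \<le> n"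
  shows "csum sw n h (\<lambda>t. swsum sw (t ! i) (\<lambda>a b. G (take i t @ a # b # drop (Suc i) t)))
       = csum sw (Suc n) h G"
  using m i
proof (induction n arbitrary: i G h)
  case 0
  then show ?case by (simp add: csum_0 csum_Suc)
next
  case (Suc m)
  show ?case
  proof (cases i)
    case 0
    have "csum sw (Suc m) h (\<lambda>t. swsum sw (t ! i) (\<lambda>a b. G (take i t @ a # b # drop (Suc i) t)))
        = swsum sw h (\<lambda>a0 b0. csum sw m b0 (\<lambda>t. swsum sw a0 (\<lambda>a b. G (a # b # t))))"
      using 0 by (simp add: csum_Suc)
    also have "\<dots> = swsum sw h (\<lambda>a0 b0. swsum sw a0 (\<lambda>a b. csum sw m b0 (\<lambda>t. G (a # b # t))))"
      by (simp add: csum_swsum_swap)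
    also have "\<dots> = swsum sw h (\<lambda>a0 b0. swsum sw b0 (\<lambda>c d. csum sw m d (\<lambda>t. G (a0 # c # t))))"
    proof (rule coass[OF vsV])
      fix y z show "lin scH sV (\<lambda>x. csum sw m z (\<lambda>t. G (x # y # t)))"
        by (rule lin_csum_param[OF vsV], rule mlin_head[OF Suc.prems(1)]) simp
    next
      fix x z show "lin scH sV (\<lambda>y. csum sw m z (\<lambda>t. G (x # y # t)))"
        by (rule lin_csum_param[OF vsV], rule mlin_head[OF mlin_Cons[OF Suc.prems(1)]]) simp
    next
      fix x y show "lin scH sV (\<lambda>z. csum sw m z (\<lambda>t. G (x # y # t)))"
        by (rule csum_arg_lin[OF vsV], rule mlin_Cons, rule mlin_Cons, rule Suc.prems(1))
    qed
    also have "\<dots> = csum sw (Suc (Suc m)) h G"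
      by (simp add: csum_Suc)
    finally show ?thesis .
  next
    case (Suc j)
    have "csum sw (Suc m) h (\<lambda>t. swsum sw (t ! i) (\<lambda>a b. G (take i t @ a # b # drop (Suc i) t)))
        = swsum sw h (\<lambda>a0 b0. csum sw m b0 (\<lambda>t. swsum sw (t ! j) (\<lambda>a b. G (a0 # take j t @ a # b # drop (Suc j) t))))"
      using Suc by (simp add: csum_Suc)
    also have "\<dots> = swsum sw h (\<lambda>a0 b0. csum sw (Suc m) b0 (\<lambda>t. G (a0 # t)))"
      using Suc.IH[OF mlin_Cons[OF Suc.prems(1)]] Suc.prems(2) Suc by simp
    also have "\<dots> = csum sw (Suc (Suc m)) h G"
      by (simp add: csum_Suc)
    finally show ?thesis .
  qed
qed

definition swp :: "nat \<Rightarrow> 'a list \<Rightarrow> 'a list" where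
  "swp i t = t[i := t ! Suc i, Suc i := t ! i]"

lemma K3:
  assumes vsV: "vector_space sV" and m: "mlin scH sV (Suc n) G" and m': "mlin scH sV (Suc n) (\<lambda>t. G (swp i t))"
    and i: "i \<le> n"
  shows "csum sw (Suc n) h G = csum sw (Suc n) h (\<lambda>t. G (swp i t))"
proof -
  have sw_eq: "swp i (take i t @ a # b # drop (Suc i) t) = take i t @ b # a # drop (Suc i) t"
    if "length t = Suc n" for t :: "'h list" and a b
    using that i by (simp add: swp_def nth_append list_update_append)
  have "csum sw (Suc n) h G = csum sw n h (\<lambda>t. swsum sw (t ! i) (\<lambda>a b. G (take i t @ a # b # drop (Suc i) t)))"
    using K2[OF vsV m i] by simp
  also have "\<dots> = csum sw n h (\<lambda>t. swsum sw (t ! i) (\<lambda>a b. G (take i t @ b # a # drop (Suc i) t)))"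
  proof (rule csum_cong)
    fix t :: "'h list" assume len: "length t = Suc n"
    show "swsum sw (t ! i) (\<lambda>a b. G (take i t @ a # b # drop (Suc i) t))
        = swsum sw (t ! i) (\<lambda>a b. G (take i t @ b # a # drop (Suc i) t))"
    proof (rule cocomm[OF vsV])
      fix b
      show "lin scH sV (\<lambda>a. G (take i t @ a # b # drop (Suc i) t))"
        by (rule mlin_pos[OF m, of "take i t @ 0 # b # drop (Suc i) t" i])
          (use len i in \<open>auto simp: list_update_append\<close>)
    next
      fix a
      show "lin scH sV (\<lambda>b. G (take i t @ a # b # drop (Suc i) t))"
        by (rule mlin_pos[OF m, of "take i t @ a # 0 # drop (Suc i) t" "Suc i"])
          (use len i in \<open>auto simp: list_update_append\<close>)
    qed
  qed
  also have "\<dots> = csum sw n h (\<lambda>t. swsum sw (t ! i) (\<lambda>a b. G (swp i (take i t @ a # b # drop (Suc i) t))))"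
    by (rule csum_cong) (simp add: sw_eq)
  also have "\<dots> = csum sw (Suc n) h (\<lambda>t. G (swp i t))"
    using K2[OF vsV m' i] by simp
  finally show ?thesis .
qed

lemma counit0:
  assumes vsV: "vector_space sV" and m: "mlin scH sV n W"
  shows "csum sw (Suc n) h (\<lambda>t. sV (eps (t ! 0)) (W (tl t))) = csum sw n h W"
proof -
  have L: "lin scH sV (\<lambda>h. csum sw n h W)" by (rule csum_arg_lin[OF vsV m])
  have "csum sw (Suc n) h (\<lambda>t. sV (eps (t ! 0)) (W (tl t)))
      = swsum sw h (\<lambda>a b. sV (eps a) (csum sw n b W))"
    by (simp add: csum_Suc csum_lin[OF lin_scale_self[OF vsV]])
  also have "\<dots> = swsum sw h (\<lambda>a b. csum sw n (scH (eps a) b) W)"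
    by (simp add: lin_scale[OF L])
  also have "\<dots> = csum sw n (swsum sw h (\<lambda>a b. scH (eps a) b)) W"
    by (simp add: swsum_lin[OF L])
  finally show ?thesis by (simp add: counitL)
qed

end

context hopf begin

lemma K2':
  assumes vsV: "vector_space sV" and m: "mlin scH sV (Suc n) G" and i: "i \<le> n"
    and H: "\<And>t. length t = Suc n \<Longrightarrow> H t = swsum sw (t ! i) (\<lambda>a b. G (take i t @ a # b # drop (Suc i) t))"
  shows "csum sw n h H = csum sw (Suc n) h G"
  using K2[OF vsV m i, of h] csum_cong[of n H, OF H] by simp

lemma K3':
  assumes vsV: "vector_space sV" and m: "mlin scH sV (Suc n) G" and m': "mlin scH sV (Suc n) G'"
    and i: "i \<le> n" and G': "\<And>t. length t = Suc (Suc n) \<Longrightarrow> G' t = G (swp i t)"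
  shows "csum sw (Suc n) h G = csum sw (Suc n) h G'"
proof -
  have m2: "mlin scH sV (Suc n) (\<lambda>t. G (swp i t))"
    unfolding mlin_def
  proof (intro allI impI)
    fix t :: "'h list" and k assume len: "length t = Suc (Suc n)" and k: "k \<le> Suc n"
    have "(\<lambda>x. G (swp i (t[k := x]))) = (\<lambda>x. G' (t[k := x]))" using G' len by simp
    then show "lin scH sV (\<lambda>x. G (swp i (t[k := x])))" using mlinD[OF m' len k] by simp
  qed
  show ?thesis using K3[OF vsV m m2 i, of h] csum_cong[of "Suc n" G', OF G'] by simp
qed

lemma lin_upd: "mlin scH sV n W \<Longrightarrow> length t = Suc n \<Longrightarrow> i \<le> n \<Longrightarrow> lin scH sV (\<lambda>x. W (t[i := x]))"
  by (rule mlinD)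

lemma counit':
  assumes vsV: "vector_space sV" and mH: "mlin scH sV (Suc n) H" and m: "mlin scH sV n W" and i: "i \<le> n"
    and H: "\<And>t. length t = Suc (Suc n) \<Longrightarrow> H t = sV (eps (t ! i)) (W (take i t @ drop (Suc i) t))"
  shows "csum sw (Suc n) h H = csum sw n h W"
proof -
  have "csum sw (Suc n) h H = csum sw n h (\<lambda>t. swsum sw (t ! i) (\<lambda>a b. H (take i t @ a # b # drop (Suc i) t)))"
    using K2[OF vsV mH i, of h] by simp
  also have "\<dots> = csum sw n h W"
  proof (rule csum_cong)
    fix t :: "'h list" assume len: "length t = Suc n"
    have L: "lin scH sV (\<lambda>x. W (t[i := x]))" by (rule lin_upd[OF m len i])
    have "swsum sw (t ! i) (\<lambda>a b. H (take i t @ a # b # drop (Suc i) t))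
        = swsum sw (t ! i) (\<lambda>a b. sV (eps a) (W (t[i := b])))"
      using len i by (simp add: H nth_append min_def upd_conv_take_nth_drop)
    also have "\<dots> = swsum sw (t ! i) (\<lambda>a b. W (t[i := scH (eps a) b]))"
      by (simp add: lin_scale[OF L])
    also have "\<dots> = W (t[i := swsum sw (t ! i) (\<lambda>a b. scH (eps a) b)])"
      by (simp only: swsum_lin[OF L])
    also have "\<dots> = W t" by (simp add: counitL)
    finally show "swsum sw (t ! i) (\<lambda>a b. H (take i t @ a # b # drop (Suc i) t)) = W t" .
  qed
  finally show ?thesis .
qed

lemma contractL':
  assumes vsV: "vector_space sV" and mH: "mlin scH sV (Suc n) H" and m: "mlin scH sV n W" and i: "i \<le> n"
    and H: "\<And>t. length t = Suc (Suc n) \<Longrightarrow> H t = W (take i t @ (S (t ! i) * t ! Suc i) # drop (Suc (Suc i)) t)"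
  shows "csum sw (Suc n) h H = csum sw n h (\<lambda>t. W (t[i := scH (eps (t ! i)) 1]))"
proof -
  have "csum sw (Suc n) h H = csum sw n h (\<lambda>t. swsum sw (t ! i) (\<lambda>a b. H (take i t @ a # b # drop (Suc i) t)))"
    using K2[OF vsV mH i, of h] by simp
  also have "\<dots> = csum sw n h (\<lambda>t. W (t[i := scH (eps (t ! i)) 1]))"
  proof (rule csum_cong)
    fix t :: "'h list" assume len: "length t = Suc n"
    have L: "lin scH sV (\<lambda>x. W (t[i := x]))" by (rule lin_upd[OF m len i])
    have "swsum sw (t ! i) (\<lambda>a b. H (take i t @ a # b # drop (Suc i) t))
        = swsum sw (t ! i) (\<lambda>a b. W (t[i := S a * b]))"
      using len i by (simp add: H nth_append min_def upd_conv_take_nth_drop)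
    also have "\<dots> = W (t[i := swsum sw (t ! i) (\<lambda>a b. S a * b)])"
      by (simp only: swsum_lin[OF L])
    also have "\<dots> = W (t[i := scH (eps (t ! i)) 1])" by (simp add: antipL)
    finally show "swsum sw (t ! i) (\<lambda>a b. H (take i t @ a # b # drop (Suc i) t)) = W (t[i := scH (eps (t ! i)) 1])" .
  qed
  finally show ?thesis .
qed

lemma contractR':
  assumes vsV: "vector_space sV" and mH: "mlin scH sV (Suc n) H" and m: "mlin scH sV n W" and i: "i \<le> n"
    and H: "\<And>t. length t = Suc (Suc n) \<Longrightarrow> H t = W (take i t @ (t ! i * S (t ! Suc i)) # drop (Suc (Suc i)) t)"
  shows "csum sw (Suc n) h H = csum sw n h (\<lambda>t. W (t[i := scH (eps (t ! i)) 1]))"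
proof -
  have "csum sw (Suc n) h H = csum sw n h (\<lambda>t. swsum sw (t ! i) (\<lambda>a b. H (take i t @ a # b # drop (Suc i) t)))"
    using K2[OF vsV mH i, of h] by simp
  also have "\<dots> = csum sw n h (\<lambda>t. W (t[i := scH (eps (t ! i)) 1]))"
  proof (rule csum_cong)
    fix t :: "'h list" assume len: "length t = Suc n"
    have L: "lin scH sV (\<lambda>x. W (t[i := x]))" by (rule lin_upd[OF m len i])
    have "swsum sw (t ! i) (\<lambda>a b. H (take i t @ a # b # drop (Suc i) t))
        = swsum sw (t ! i) (\<lambda>a b. W (t[i := a * S b]))"
      using len i by (simp add: H nth_append min_def upd_conv_take_nth_drop)
    also have "\<dots> = W (t[i := swsum sw (t ! i) (\<lambda>a b. a * S b)])"
      by (simp only: swsum_lin[OF L])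
    also have "\<dots> = W (t[i := scH (eps (t ! i)) 1])" by (simp add: antipR)
    finally show "swsum sw (t ! i) (\<lambda>a b. H (take i t @ a # b # drop (Suc i) t)) = W (t[i := scH (eps (t ! i)) 1])" .
  qed
  finally show ?thesis .
qed

lemma csum1: "csum sw 1 h G = swsum sw h (\<lambda>a b. G [a, b])"
  by (simp add: csum_Suc csum_0)

lemmas linI = lin_id lin_addf lin_swsum_param lin_csum_param lin_scale_right lin_scale_left
  lin_mult_right lin_mult_left lin_multR lin_multL lin_S lin_eps lin_swsum_arg lin_csum_arg
  mlin0I mlin1I mlin2I mlin3I mlin4I vsH vs_field

lemma S_one: "S 1 = 1"
proof -
  have "swsum sw 1 (\<lambda>a b. S a * b) = S 1 * 1"
    by (rule sw_one_sum[OF vsH]) (auto intro!: linI)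
  then show ?thesis using antipL[of 1] by (simp add: eps_one vector_space.vector_space_assms(4)[OF vsH])
qed

end

context hopf begin

lemma contractL2':
  assumes vsV: "vector_space sV" and mH: "mlin scH sV (Suc n) H" and m: "mlin scH sV n W" and i: "i \<le> n"
    and H: "\<And>t. length t = Suc (Suc n) \<Longrightarrow> H t = W (take i t @ (S (t ! Suc i) * t ! i) # drop (Suc (Suc i)) t)"
  shows "csum sw (Suc n) h H = csum sw n h (\<lambda>t. W (t[i := scH (eps (t ! i)) 1]))"
proof -
  have "csum sw (Suc n) h H = csum sw n h (\<lambda>t. swsum sw (t ! i) (\<lambda>a b. H (take i t @ a # b # drop (Suc i) t)))"
    using K2[OF vsV mH i, of h] by simp
  also have "\<dots> = csum sw n h (\<lambda>t. W (t[i := scH (eps (t ! i)) 1]))"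
  proof (rule csum_cong)
    fix t :: "'h list" assume len: "length t = Suc n"
    have L: "lin scH sV (\<lambda>x. W (t[i := x]))" by (rule lin_upd[OF m len i])
    have "swsum sw (t ! i) (\<lambda>a b. H (take i t @ a # b # drop (Suc i) t))
        = swsum sw (t ! i) (\<lambda>a b. W (t[i := S b * a]))"
      using len i by (simp add: H nth_append min_def upd_conv_take_nth_drop)
    also have "\<dots> = swsum sw (t ! i) (\<lambda>a b. W (t[i := S a * b]))"
      by (rule cocomm[OF vsV]) (auto intro!: linI lin_comp[OF L])
    also have "\<dots> = W (t[i := swsum sw (t ! i) (\<lambda>a b. S a * b)])"
      by (simp only: swsum_lin[OF L])
    also have "\<dots> = W (t[i := scH (eps (t ! i)) 1])" by (simp add: antipL)
    finally show "swsum sw (t ! i) (\<lambda>a b. H (take i t @ a # b # drop (Suc i) t)) = W (t[i := scH (eps (t ! i)) 1])" .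
  qed
  finally show ?thesis .
qed

lemma scH_one: "scH 1 x = x" using vsH by (simp add: vector_space.vector_space_assms(4))
lemma scH_scale: "scH a (scH b x) = scH (a * b) x" using vsH by (simp add: vector_space.vector_space_assms(3))
lemma scH_mult1: "scH c 1 * x = scH c x" by (simp add: sc_multL[symmetric])
lemma scH_mult1': "x * scH c 1 = scH c x" by (simp add: sc_multR[symmetric])

lemma eps_S: "eps (S h) = eps h"
proof -
  have "eps h = eps (scH (eps h) 1)" by (simp add: lin_scale[OF eps_lin] eps_one)
  also have "\<dots> = eps (swsum sw h (\<lambda>a b. S a * b))" by (simp add: antipL)
  also have "\<dots> = swsum sw h (\<lambda>a b. eps (S a) * eps b)" by (simp add: swsum_lin[OF eps_lin] eps_mult)
  also have "\<dots> = swsum sw h (\<lambda>a b. eps (S (scH (eps b) a)))"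
    by (simp add: lin_scale[OF eps_lin] lin_scale[OF S_lin] mult.commute)
  also have "\<dots> = eps (S h)"
    using swsum_lin[OF lin_comp[OF eps_lin S_lin], of sw h "\<lambda>a b. scH (eps b) a"] by (simp add: counitR)
  finally show ?thesis by simp
qed


lemma epsE:
  assumes vsV: "vector_space sV" and F1: "\<And>b. lin scH sV (\<lambda>a. F a b)" and F2: "\<And>a. lin scH sV (F a)"
  shows "sV (eps g) (F u v) = swsum sw g (\<lambda>a b. swsum sw a (\<lambda>a1 a2. swsum sw (S b)
            (\<lambda>r1 r2. F (u * (a1 * r1)) (v * (a2 * r2)))))"
proof -
  note FL = lin_comp[OF F1] and FR = lin_comp[OF F2]
  let ?Fu = "\<lambda>p q. F (u * p) (v * q)"
  have L: "lin scH sV (\<lambda>x. swsum sw x ?Fu)"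
    by (rule swsum_arg_lin[OF vsV]) (auto intro!: linI FL FR vsV)
  have "swsum sw 1 ?Fu = F u v"
    by (subst sw_one_sum[OF vsV]) (auto intro!: linI FL FR vsV)
  then have "sV (eps g) (F u v) = sV (eps g) (swsum sw 1 ?Fu)" by simp
  also have "\<dots> = swsum sw (scH (eps g) 1) ?Fu" by (simp add: lin_scale[OF L])
  also have "\<dots> = swsum sw (swsum sw g (\<lambda>a b. a * S b)) ?Fu" by (simp add: antipR)
  also have "\<dots> = swsum sw g (\<lambda>a b. swsum sw (a * S b) ?Fu)" by (simp only: swsum_lin[OF L])
  also have "\<dots> = swsum sw g (\<lambda>a b. swsum sw a (\<lambda>a1 a2. swsum sw (S b)
            (\<lambda>r1 r2. F (u * (a1 * r1)) (v * (a2 * r2)))))"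
    by (subst sw_mult_sum[OF vsV]) (auto intro!: linI FL FR vsV)
  finally show ?thesis .
qed


lemma mlinS1: "(\<And>b. lin sH sV (\<lambda>x. G [x, b])) \<Longrightarrow> (\<And>a. lin sH sV (\<lambda>x. G [a, x])) \<Longrightarrow> mlin sH sV (Suc 0) G"
  unfolding mlin_def by (auto simp: length_Suc_conv le_Suc_eq)
lemma mlinS2: "(\<And>b c. lin sH sV (\<lambda>x. G [x, b, c])) \<Longrightarrow> (\<And>a c. lin sH sV (\<lambda>x. G [a, x, c]))
   \<Longrightarrow> (\<And>a b. lin sH sV (\<lambda>x. G [a, b, x])) \<Longrightarrow> mlin sH sV (Suc (Suc 0)) G"
  unfolding mlin_def by (auto simp: length_Suc_conv le_Suc_eq)
lemma mlinS3: "(\<And>b c d. lin sH sV (\<lambda>x. G [x, b, c, d])) \<Longrightarrow> (\<And>a c d. lin sH sV (\<lambda>x. G [a, x, c, d]))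
   \<Longrightarrow> (\<And>a b d. lin sH sV (\<lambda>x. G [a, b, x, d])) \<Longrightarrow> (\<And>a b c. lin sH sV (\<lambda>x. G [a, b, c, x]))
   \<Longrightarrow> mlin sH sV (Suc (Suc (Suc 0))) G"
  unfolding mlin_def by (auto simp: length_Suc_conv le_Suc_eq)
lemma mlinS4: "(\<And>b c d e. lin sH sV (\<lambda>x. G [x, b, c, d, e])) \<Longrightarrow> (\<And>a c d e. lin sH sV (\<lambda>x. G [a, x, c, d, e]))
   \<Longrightarrow> (\<And>a b d e. lin sH sV (\<lambda>x. G [a, b, x, d, e])) \<Longrightarrow> (\<And>a b c e. lin sH sV (\<lambda>x. G [a, b, c, x, e]))
   \<Longrightarrow> (\<And>a b c d. lin sH sV (\<lambda>x. G [a, b, c, d, x]))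
   \<Longrightarrow> mlin sH sV (Suc (Suc (Suc (Suc 0)))) G"
  unfolding mlin_def by (auto simp: length_Suc_conv le_Suc_eq)

lemma csum_trans_cong: "csum sw m h A = csum sw n h B \<Longrightarrow> (\<And>t. length t = Suc n \<Longrightarrow> B t = C t)
   \<Longrightarrow> csum sw m h A = csum sw n h C"
  using csum_cong[of n B C sw h] by simp

lemmas linS = linI mlinS1 mlinS2 mlinS3 mlinS4

lemma S_cop:
  assumes vsV: "vector_space sV" and F1: "\<And>b. lin scH sV (\<lambda>a. F a b)" and F2: "\<And>a. lin scH sV (F a)"
  shows "swsum sw (S h) F = swsum sw h (\<lambda>a b. F (S a) (S b))"
proof -
  note FL = lin_comp[OF F1] and FR = lin_comp[OF F2]
  note LI = linS FL FR vsV
  have "swsum sw h (\<lambda>a b. F (S a) (S b)) = csum sw (Suc 0) h (\<lambda>t. F (S (t!0)) (S (t!1)))"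
    by (simp add: csum_Suc csum_0)
  also have "\<dots> = csum sw (Suc (Suc 0)) h (\<lambda>t. sV (eps (t!1)) (F (S (t!0)) (S (t!2))))"
    by (rule counit'[OF vsV, where i=1, symmetric]) (auto intro!: LI simp: length_Suc_conv)
  also have "\<dots> = csum sw (Suc (Suc 0)) h (\<lambda>t. swsum sw (t!1) (\<lambda>a b. swsum sw a (\<lambda>a1 a2. swsum sw (S b)
            (\<lambda>r1 r2. F (S (t!0) * (a1 * r1)) (S (t!2) * (a2 * r2))))))"
    by (rule csum_cong) (rule epsE[OF vsV F1 F2])
  also have "\<dots> = csum sw (Suc (Suc (Suc 0))) h (\<lambda>t. swsum sw (t!1) (\<lambda>a1 a2. swsum sw (S (t!2))
            (\<lambda>r1 r2. F (S (t!0) * (a1 * r1)) (S (t!3) * (a2 * r2)))))"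
    by (rule K2'[OF vsV, where i=1]) (auto intro!: LI simp: length_Suc_conv)
  also have "\<dots> = csum sw (Suc (Suc (Suc (Suc 0)))) h (\<lambda>t. swsum sw (S (t!3))
            (\<lambda>r1 r2. F (S (t!0) * (t!1 * r1)) (S (t!4) * (t!2 * r2))))"
    by (rule K2'[OF vsV, where i=1]) (auto intro!: LI simp: length_Suc_conv)
  also have "\<dots> = csum sw (Suc (Suc (Suc 0))) h (\<lambda>t. swsum sw (S (t!2))
            (\<lambda>r1 r2. F (scH (eps (t!0)) 1 * r1) (S (t!3) * (t!1 * r2))))"
    by (rule csum_trans_cong[OF contractL'[OF vsV, where i=0 and
          W="\<lambda>u. swsum sw (S (u!2)) (\<lambda>r1 r2. F (u!0 * r1) (S (u!3) * (u!1 * r2)))"]])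
      (auto intro!: LI simp: length_Suc_conv mult.assoc)
  also have "\<dots> = csum sw (Suc (Suc (Suc 0))) h (\<lambda>t. sV (eps (t!0)) (swsum sw (S (t!2))
            (\<lambda>r1 r2. F r1 (S (t!3) * (t!1 * r2)))))"
    by (rule csum_cong) (simp add: scH_mult1 lin_scale[OF F1] swsum_lin[OF lin_scale_self[OF vsV]])
  also have "\<dots> = csum sw (Suc (Suc 0)) h (\<lambda>t. swsum sw (S (t!1)) (\<lambda>r1 r2. F r1 (S (t!2) * (t!0 * r2))))"
    by (rule counit'[OF vsV, where i=0]) (auto intro!: LI simp: length_Suc_conv)
  also have "\<dots> = csum sw (Suc (Suc 0)) h (\<lambda>t. swsum sw (S (t!0)) (\<lambda>r1 r2. F r1 (S (t!2) * (t!1 * r2))))"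
    by (rule K3'[OF vsV, where i=0]) (auto intro!: LI simp: length_Suc_conv swp_def)
  also have "\<dots> = csum sw (Suc 0) h (\<lambda>t. swsum sw (S (t!0)) (\<lambda>r1 r2. F r1 (scH (eps (t!1)) 1 * r2)))"
    by (rule csum_trans_cong[OF contractL2'[OF vsV, where i=1 and
          W="\<lambda>u. swsum sw (S (u!0)) (\<lambda>r1 r2. F r1 (u!1 * r2))"]])
      (auto intro!: LI simp: length_Suc_conv mult.assoc)
  also have "\<dots> = swsum sw h (\<lambda>a b. swsum sw (S (scH (eps b) a)) F)"
  proof -
    have L: "lin scH sV (\<lambda>x. swsum sw (S x) F)" by (auto intro!: LI)
    show ?thesis
      by (simp add: csum_Suc csum_0 scH_mult1 lin_scale[OF F2] lin_scale[OF L] swsum_lin[OF lin_scale_self[OF vsV]])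
  qed
  also have "\<dots> = swsum sw (S h) F"
  proof -
    have L: "lin scH sV (\<lambda>x. swsum sw (S x) F)" by (auto intro!: LI)
    show ?thesis using swsum_lin[OF L, of sw h "\<lambda>a b. scH (eps b) a"] by (simp add: counitR)
  qed
  finally show ?thesis by simp
qed


lemma scH_mult_both: "scH p u * scH q v = scH (q * p) (u * v)"
  by (simp add: sc_multL[symmetric] sc_multR[symmetric] scH_scale)

lemma S_counit: "S x = swsum sw x (\<lambda>a b. scH (eps a) (S b))"
  using swsum_lin[OF S_lin, of sw x "\<lambda>a b. scH (eps a) b"] by (simp add: counitL lin_scale[OF S_lin])

lemma counitR_lin: "lin scH sV L \<Longrightarrow> swsum sw y (\<lambda>c d. sV (eps d) (L c)) = L y"
  using swsum_lin[of scH sV L sw y "\<lambda>a b. scH (eps b) a"] by (simp add: counitR lin_scale)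

lemma S_mult: "S (x * y) = S y * S x"
proof -
  note LI = linS vsH
  have "S y * S x = swsum sw x (\<lambda>a b. swsum sw y (\<lambda>c d. scH (eps a * eps c) (S d * S b)))"
  proof -
    have "S y * S x = swsum sw y (\<lambda>c d. scH (eps c) (S d)) * swsum sw x (\<lambda>a b. scH (eps a) (S b))"
      using S_counit[of x] S_counit[of y] by simp
    also have "\<dots> = swsum sw x (\<lambda>a b. swsum sw y (\<lambda>c d. scH (eps c) (S d) * scH (eps a) (S b)))"
      by (simp add: swsum_lin[OF lin_multR[OF lin_id]] swsum_lin[OF lin_multL[OF lin_id]])
    also have "\<dots> = swsum sw x (\<lambda>a b. swsum sw y (\<lambda>c d. scH (eps a * eps c) (S d * S b)))"
      by (simp add: scH_mult_both)
    finally show ?thesis .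
  qed
  also have "\<dots> = swsum sw x (\<lambda>a b. swsum sw y (\<lambda>c d. swsum sw (a * c) (\<lambda>u v. S u * v) * (S d * S b)))"
    by (simp add: antipL eps_mult scH_mult1)
  also have "\<dots> = swsum sw x (\<lambda>a b. swsum sw y (\<lambda>c d. swsum sw a (\<lambda>a1 a2. swsum sw c (\<lambda>c1 c2.
        S (a1 * c1) * (a2 * c2) * (S d * S b)))))"
  proof -
    have "swsum sw (a * c) (\<lambda>u v. S u * v) * Z = swsum sw a (\<lambda>a1 a2. swsum sw c (\<lambda>c1 c2.
        S (a1 * c1) * (a2 * c2) * Z))" for a c Z
    proof -
      have "swsum sw (a * c) (\<lambda>u v. S u * v) * Z = swsum sw (a * c) (\<lambda>u v. S u * v * Z)"
        by (simp add: swsum_lin[OF lin_multR[OF lin_id]])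
      also have "\<dots> = swsum sw a (\<lambda>a1 a2. swsum sw c (\<lambda>c1 c2. S (a1 * c1) * (a2 * c2) * Z))"
        by (rule sw_mult_sum[OF vsH]) (auto intro!: LI)
      finally show ?thesis .
    qed
    then show ?thesis by simp
  qed
  also have "\<dots> = swsum sw x (\<lambda>a b. swsum sw a (\<lambda>a1 a2. swsum sw y (\<lambda>c d. swsum sw c (\<lambda>c1 c2.
        S (a1 * c1) * (a2 * c2) * (S d * S b)))))"
    by (simp only: swsum_swap[of sw y])
  also have "\<dots> = csum sw (Suc 0) x (\<lambda>s. swsum sw (s!0) (\<lambda>a1 a2. swsum sw y (\<lambda>c d. swsum sw c (\<lambda>c1 c2.
        S (a1 * c1) * (a2 * c2) * (S d * S (s!1))))))"
    by (simp add: csum_Suc csum_0)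
  also have "\<dots> = csum sw (Suc (Suc 0)) x (\<lambda>s. swsum sw y (\<lambda>c d. swsum sw c (\<lambda>c1 c2.
        S (s!0 * c1) * (s!1 * c2) * (S d * S (s!2)))))"
    by (rule K2'[OF vsH, where i=0]) (auto intro!: LI simp: length_Suc_conv)
  also have "\<dots> = csum sw (Suc (Suc 0)) x (\<lambda>s. S (s!0 * y) * s!1 * S (s!2))"
  proof (rule csum_cong)
    fix s :: "'h list" assume "length s = Suc (Suc (Suc 0))"
    have "swsum sw y (\<lambda>c d. swsum sw c (\<lambda>c1 c2. S (s!0 * c1) * (s!1 * c2) * (S d * S (s!2))))
        = csum sw (Suc 0) y (\<lambda>t. swsum sw (t!0) (\<lambda>c1 c2. S (s!0 * c1) * (s!1 * c2) * (S (t!1) * S (s!2))))"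
      by (simp add: csum_Suc csum_0)
    also have "\<dots> = csum sw (Suc (Suc 0)) y (\<lambda>t. S (s!0 * t!0) * (s!1 * t!1) * (S (t!2) * S (s!2)))"
      by (rule K2'[OF vsH, where i=0]) (auto intro!: LI simp: length_Suc_conv)
    also have "\<dots> = csum sw (Suc 0) y (\<lambda>t. S (s!0 * t!0) * (s!1 * scH (eps (t!1)) 1) * S (s!2))"
      by (rule csum_trans_cong[OF contractR'[OF vsH, where i=1 and
          W="\<lambda>u. S (s!0 * u!0) * (s!1 * u!1) * S (s!2)"]])
        (auto intro!: LI simp: length_Suc_conv mult.assoc)
    also have "\<dots> = swsum sw y (\<lambda>c d. scH (eps d) (S (s!0 * c) * s!1 * S (s!2)))"
      by (simp add: csum_Suc csum_0 scH_mult1' sc_multL[symmetric] sc_multR[symmetric])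
    also have "\<dots> = S (s!0 * y) * s!1 * S (s!2)"
      by (rule counitR_lin) (auto intro!: LI)
    finally show "swsum sw y (\<lambda>c d. swsum sw c (\<lambda>c1 c2. S (s!0 * c1) * (s!1 * c2) * (S d * S (s!2))))
        = S (s!0 * y) * s!1 * S (s!2)" .
  qed
  also have "\<dots> = csum sw (Suc 0) x (\<lambda>s. S (s!0 * y) * scH (eps (s!1)) 1)"
    by (rule csum_trans_cong[OF contractR'[OF vsH, where i=1 and W="\<lambda>u. S (u!0 * y) * u!1"]])
      (auto intro!: LI simp: length_Suc_conv mult.assoc)
  also have "\<dots> = swsum sw x (\<lambda>a b. scH (eps b) (S (a * y)))"
    by (simp add: csum_Suc csum_0 scH_mult1')
  also have "\<dots> = S (x * y)"
    by (rule counitR_lin) (auto intro!: LI)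
  finally show ?thesis by simp
qed

end

context hopf begin

lemma contractR2':
  assumes vsV: "vector_space sV" and mH: "mlin scH sV (Suc n) H" and m: "mlin scH sV n W" and i: "i \<le> n"
    and H: "\<And>t. length t = Suc (Suc n) \<Longrightarrow> H t = W (take i t @ (t ! Suc i * S (t ! i)) # drop (Suc (Suc i)) t)"
  shows "csum sw (Suc n) h H = csum sw n h (\<lambda>t. W (t[i := scH (eps (t ! i)) 1]))"
proof -
  have "csum sw (Suc n) h H = csum sw n h (\<lambda>t. swsum sw (t ! i) (\<lambda>a b. H (take i t @ a # b # drop (Suc i) t)))"
    using K2[OF vsV mH i, of h] by simp
  also have "\<dots> = csum sw n h (\<lambda>t. W (t[i := scH (eps (t ! i)) 1]))"
  proof (rule csum_cong)
    fix t :: "'h list" assume len: "length t = Suc n"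
    have L: "lin scH sV (\<lambda>x. W (t[i := x]))" by (rule lin_upd[OF m len i])
    have "swsum sw (t ! i) (\<lambda>a b. H (take i t @ a # b # drop (Suc i) t))
        = swsum sw (t ! i) (\<lambda>a b. W (t[i := b * S a]))"
      using len i by (simp add: H nth_append min_def upd_conv_take_nth_drop)
    also have "\<dots> = swsum sw (t ! i) (\<lambda>a b. W (t[i := a * S b]))"
      by (rule cocomm[OF vsV]) (auto intro!: linI lin_comp[OF L])
    also have "\<dots> = W (t[i := swsum sw (t ! i) (\<lambda>a b. a * S b)])"
      by (simp only: swsum_lin[OF L])
    also have "\<dots> = W (t[i := scH (eps (t ! i)) 1])" by (simp add: antipR)
    finally show "swsum sw (t ! i) (\<lambda>a b. H (take i t @ a # b # drop (Suc i) t)) = W (t[i := scH (eps (t ! i)) 1])" .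
  qed
  finally show ?thesis .
qed

lemma counitR':
  assumes vsV: "vector_space sV" and mH: "mlin scH sV (Suc n) H" and m: "mlin scH sV n W" and i: "i \<le> n"
    and H: "\<And>t. length t = Suc (Suc n) \<Longrightarrow> H t = sV (eps (t ! Suc i)) (W (take (Suc i) t @ drop (Suc (Suc i)) t))"
  shows "csum sw (Suc n) h H = csum sw n h W"
proof -
  have "csum sw (Suc n) h H = csum sw n h (\<lambda>t. swsum sw (t ! i) (\<lambda>a b. H (take i t @ a # b # drop (Suc i) t)))"
    using K2[OF vsV mH i, of h] by simp
  also have "\<dots> = csum sw n h W"
  proof (rule csum_cong)
    fix t :: "'h list" assume len: "length t = Suc n"
    have L: "lin scH sV (\<lambda>x. W (t[i := x]))" by (rule lin_upd[OF m len i])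
    have "swsum sw (t ! i) (\<lambda>a b. H (take i t @ a # b # drop (Suc i) t))
        = swsum sw (t ! i) (\<lambda>a b. sV (eps b) (W (t[i := a])))"
      using len i by (simp add: H nth_append min_def upd_conv_take_nth_drop take_Cons')
    also have "\<dots> = W (t[i := t ! i])"
      by (rule counitR_lin[OF L])
    finally show "swsum sw (t ! i) (\<lambda>a b. H (take i t @ a # b # drop (Suc i) t)) = W t" by simp
  qed
  finally show ?thesis .
qed

end

lemma lin_linear: "vector_space s1 \<Longrightarrow> vector_space s2 \<Longrightarrow> lin s1 s2 f \<Longrightarrow> Vector_Spaces.linear s1 s2 f"
  by (simp add: Vector_Spaces.linear_iff lin_def)

locale bimod = hopf scH sw eps S
  for scH :: "'k::field \<Rightarrow> 'h::ring_1 \<Rightarrow> 'h" and sw eps S +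
  fixes scA :: "'k \<Rightarrow> 'a::ring_1 \<Rightarrow> 'a" and lact :: "'h \<Rightarrow> 'a \<Rightarrow> 'a" and ract :: "'a \<Rightarrow> 'h \<Rightarrow> 'a"
  assumes bimod: "bimodule_algebra scH sw eps scA lact ract"
begin

lemma kalgA: "k_algebra scA" using bimod by (simp add: bimodule_algebra_def)
lemma vsA: "vector_space scA" using kalgA by (simp add: k_algebra_def)
lemma scA_multL: "scA c (x * y) = scA c x * y" using kalgA unfolding k_algebra_def by metis
lemma scA_multR: "scA c (x * y) = x * scA c y" using kalgA unfolding k_algebra_def by metis
lemma lact_lin1: "lin scA scA (lact h)" using bimod by (simp add: bimodule_algebra_def linear_lin)
lemma lact_lin2: "lin scH scA (\<lambda>h. lact h a)" using bimod by (simp add: bimodule_algebra_def linear_lin)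
lemma ract_lin1: "lin scA scA (\<lambda>a. ract a h)" using bimod by (simp add: bimodule_algebra_def linear_lin)
lemma ract_lin2: "lin scH scA (ract a)" using bimod by (simp add: bimodule_algebra_def linear_lin)
lemma lact_mult: "lact (x * y) a = lact x (lact y a)" using bimod by (simp add: bimodule_algebra_def)
lemma lact_one: "lact 1 a = a" using bimod by (simp add: bimodule_algebra_def)
lemma ract_mult: "ract a (x * y) = ract (ract a x) y" using bimod by (simp add: bimodule_algebra_def)
lemma ract_one: "ract a 1 = a" using bimod by (simp add: bimodule_algebra_def)
lemma lr_comm: "ract (lact x a) y = lact x (ract a y)" using bimod by (simp add: bimodule_algebra_def)
lemma lact_prod: "lact h (a * b) = swsum sw h (\<lambda>h1 h2. lact h1 a * lact h2 b)"
  using bimod by (simp add: bimodule_algebra_def swsum_def split_def)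
lemma ract_prod: "ract (a * b) h = swsum sw h (\<lambda>h1 h2. ract a h1 * ract b h2)"
  using bimod by (simp add: bimodule_algebra_def swsum_def split_def)
lemma lact_unit: "lact h 1 = scA (eps h) 1" using bimod by (simp add: bimodule_algebra_def)
lemma ract_unit: "ract 1 h = scA (eps h) 1" using bimod by (simp add: bimodule_algebra_def)

lemma lin_lact1: "lin s1 scA f \<Longrightarrow> lin s1 scA (\<lambda>x. lact h (f x))" using lin_comp[OF lact_lin1] .
lemma lin_lact2: "lin s1 scH f \<Longrightarrow> lin s1 scA (\<lambda>x. lact (f x) a)" using lin_comp[OF lact_lin2] .
lemma lin_ract1: "lin s1 scA f \<Longrightarrow> lin s1 scA (\<lambda>x. ract (f x) h)" using lin_comp[OF ract_lin1] .
lemma lin_ract2: "lin s1 scH f \<Longrightarrow> lin s1 scA (\<lambda>x. ract a (f x))" using lin_comp[OF ract_lin2] .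
lemma lin_multRA: "lin s1 scA f \<Longrightarrow> lin s1 scA (\<lambda>x. f x * c)"
  by (simp add: lin_def distrib_right scA_multL)
lemma lin_multLA: "lin s1 scA f \<Longrightarrow> lin s1 scA (\<lambda>x. c * f x)"
  by (simp add: lin_def distrib_left scA_multR)

lemmas linA = linS lin_lact1 lin_lact2 lin_ract1 lin_ract2 lin_multRA lin_multLA vsA

abbreviation act where "act \<equiv> conj_action sw S lact ract"

lemma act_eq: "act h a = swsum sw h (\<lambda>b c. ract (lact b a) (S c))"
  by (simp add: conj_action_def swsum_def)

lemma act_mult: "act (x * y) a = act x (act y a)"
proof -
  have "act (x * y) a = swsum sw x (\<lambda>a1 a2. swsum sw y (\<lambda>c1 c2. ract (lact (a1 * c1) a) (S (a2 * c2))))"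
    unfolding act_eq by (rule sw_mult_sum[OF vsA]) (auto intro!: linA)
  also have "\<dots> = swsum sw x (\<lambda>a1 a2. swsum sw y (\<lambda>c1 c2. ract (lact a1 (ract (lact c1 a) (S c2))) (S a2)))"
    by (simp add: lact_mult S_mult ract_mult lr_comm)
  also have "\<dots> = swsum sw x (\<lambda>a1 a2. ract (lact a1 (swsum sw y (\<lambda>c1 c2. ract (lact c1 a) (S c2)))) (S a2))"
  proof -
    have L: "lin scA scA (\<lambda>w. ract (lact a1 w) (S a2))" for a1 a2 by (auto intro!: linA)
    show ?thesis by (simp add: swsum_lin[OF L])
  qed
  also have "\<dots> = act x (act y a)" by (simp add: act_eq)
  finally show ?thesis .
qed

lemma act_one: "act 1 a = a"
proof -
  have "act 1 a = ract (lact 1 a) (S 1)"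
    unfolding act_eq by (rule sw_one_sum[OF vsA]) (auto intro!: linA)
  then show ?thesis by (simp add: lact_one S_one ract_one)
qed

lemma act_unit: "act h 1 = scA (eps h) 1"
proof -
  have L: "lin scH scA (\<lambda>x. scA (eps x) 1)" by (auto intro!: linA)
  have "act h 1 = swsum sw h (\<lambda>b c. scA (eps b) (scA (eps c) 1))"
    unfolding act_eq by (simp add: lact_unit lin_scale[OF ract_lin1] ract_unit eps_S)
  also have "\<dots> = swsum sw h (\<lambda>b c. scA (eps c) (scA (eps b) 1))"
    by (simp add: vector_space.vector_space_assms(3)[OF vsA] mult.commute)
  also have "\<dots> = scA (eps h) 1"
    using counitR_lin[OF L, of h] by (simp add: lin_scale[OF eps_lin] vector_space.vector_space_assms(3)[OF vsA] mult.commute)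
  finally show ?thesis .
qed


lemma act_prod: "act h (a * b) = swsum sw h (\<lambda>c d. act c a * act d b)"
proof -
  note LI = linA
  have "act h (a * b) = swsum sw h (\<lambda>u v. swsum sw u (\<lambda>u1 u2. ract (lact u1 a * lact u2 b) (S v)))"
    unfolding act_eq by (simp add: lact_prod swsum_lin[OF ract_lin1])
  also have "\<dots> = csum sw (Suc 0) h (\<lambda>t. swsum sw (t!0) (\<lambda>u1 u2. ract (lact u1 a * lact u2 b) (S (t!1))))"
    by (simp add: csum_Suc csum_0)
  also have "\<dots> = csum sw (Suc (Suc 0)) h (\<lambda>t. ract (lact (t!0) a * lact (t!1) b) (S (t!2)))"
    by (rule K2'[OF vsA, where i=0]) (auto intro!: LI simp: length_Suc_conv)
  also have "\<dots> = csum sw (Suc (Suc 0)) h (\<lambda>t. swsum sw (t!2) (\<lambda>p q. ract (lact (t!0) a) (S p) * ract (lact (t!1) b) (S q)))"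
  proof (rule csum_cong)
    fix t :: "'h list"
    show "ract (lact (t!0) a * lact (t!1) b) (S (t!2))
        = swsum sw (t!2) (\<lambda>p q. ract (lact (t!0) a) (S p) * ract (lact (t!1) b) (S q))"
      unfolding ract_prod by (rule S_cop[OF vsA]) (auto intro!: LI)
  qed
  also have "\<dots> = csum sw (Suc (Suc (Suc 0))) h (\<lambda>t. ract (lact (t!0) a) (S (t!2)) * ract (lact (t!1) b) (S (t!3)))"
    by (rule K2'[OF vsA, where i=2]) (auto intro!: LI simp: length_Suc_conv)
  also have "\<dots> = csum sw (Suc (Suc (Suc 0))) h (\<lambda>t. ract (lact (t!0) a) (S (t!1)) * ract (lact (t!2) b) (S (t!3)))"
    by (rule K3'[OF vsA, where i=1]) (auto intro!: LI simp: length_Suc_conv swp_def)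
  also have "\<dots> = csum sw (Suc (Suc 0)) h (\<lambda>t. swsum sw (t!2) (\<lambda>p q. ract (lact (t!0) a) (S (t!1)) * ract (lact p b) (S q)))"
    by (rule K2'[OF vsA, where i=2, symmetric]) (auto intro!: LI simp: length_Suc_conv)
  also have "\<dots> = csum sw (Suc (Suc 0)) h (\<lambda>t. ract (lact (t!0) a) (S (t!1)) * act (t!2) b)"
    by (rule csum_cong) (simp add: act_eq swsum_lin[OF lin_multLA[OF lin_id]])
  also have "\<dots> = csum sw (Suc 0) h (\<lambda>t. swsum sw (t!0) (\<lambda>p q. ract (lact p a) (S q) * act (t!1) b))"
    by (rule K2'[OF vsA, where i=0, symmetric]) (auto intro!: LI simp: length_Suc_conv act_eq)
  also have "\<dots> = swsum sw h (\<lambda>c d. act c a * act d b)"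
    by (simp add: csum_Suc csum_0 act_eq swsum_lin[OF lin_multRA[OF lin_id]])
  finally show ?thesis .
qed

lemma left_mod: "left_module_algebra scH sw eps scA act"
  unfolding left_module_algebra_def
proof (intro conjI allI)
  show "k_algebra scA" by (rule kalgA)
next
  fix h
  have e: "act h = (\<lambda>a. swsum sw h (\<lambda>b c. ract (lact b a) (S c)))" by (rule ext) (simp add: act_eq)
  show "Vector_Spaces.linear scA scA (act h)"
    unfolding e by (rule lin_linear[OF vsA vsA]) (auto intro!: linA)
next
  fix a show "Vector_Spaces.linear scH scA (\<lambda>h. act h a)"
    by (rule lin_linear[OF vsH vsA]) (auto simp: act_eq intro!: linA)
next
  fix x y a show "act (x * y) a = act x (act y a)" by (rule act_mult)
next
  fix a show "act 1 a = a" by (rule act_one)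
next
  fix h a b show "act h (a * b) = sum_list (map (\<lambda>(h1, h2). act h1 a * act h2 b) (sw h))"
    using act_prod by (simp add: swsum_def)
next
  fix h show "act h 1 = scA (eps h) 1" by (rule act_unit)
qed

end

context bimod begin

lemma ract_scale1: "ract x (scH c 1) = scA c x"
  by (simp add: lin_scale[OF ract_lin2] ract_one)

lemma ract_prod_S: "ract (X * Y) (S g) = swsum sw g (\<lambda>u v. ract X (S v) * ract Y (S u))"
proof -
  have "ract (X * Y) (S g) = swsum sw g (\<lambda>u v. ract X (S u) * ract Y (S v))"
    unfolding ract_prod by (rule S_cop[OF vsA]) (auto intro!: linA)
  also have "\<dots> = swsum sw g (\<lambda>u v. ract X (S v) * ract Y (S u))"
    by (rule cocomm[OF vsA]) (auto intro!: linA)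
  finally show ?thesis .
qed

lemma inner1:
  fixes \<beta> :: "'a \<Rightarrow> 'h \<Rightarrow> 'k"
  assumes B1: "\<And>y. lin scA (*) (\<lambda>x. \<beta> x y)" and B2: "\<And>x. lin scH (*) (\<beta> x)"
  shows "swsum sw h' (\<lambda>k1 k2. swsum sw k1 (\<lambda>c1 c2. \<beta> (ract (ract \<phi> k2 * Y) (S (p2 * c2))) (p1 * c1)))
       = csum sw (Suc 0) h' (\<lambda>q. \<beta> (ract (\<phi> * ract Y (S (q!1))) (S p2)) (p1 * q!0))"
proof -
  note BL = lin_comp[OF B1] and BR = lin_comp[OF B2]
  note LI = linA BL BR vs_field
  have vsk: "vector_space ((*) :: 'k \<Rightarrow> 'k \<Rightarrow> 'k)" by (rule vs_field)
  have "swsum sw h' (\<lambda>k1 k2. swsum sw k1 (\<lambda>c1 c2. \<beta> (ract (ract \<phi> k2 * Y) (S (p2 * c2))) (p1 * c1)))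
      = csum sw (Suc 0) h' (\<lambda>q. swsum sw (q!0) (\<lambda>c1 c2. \<beta> (ract (ract \<phi> (q!1) * Y) (S (p2 * c2))) (p1 * c1)))"
    by (simp add: csum_Suc csum_0)
  also have "\<dots> = csum sw (Suc (Suc 0)) h' (\<lambda>q. \<beta> (ract (ract \<phi> (q!2) * Y) (S (p2 * q!1))) (p1 * q!0))"
    by (rule K2'[OF vsk, where i=0]) (auto intro!: LI simp: length_Suc_conv)
  also have "\<dots> = csum sw (Suc (Suc 0)) h' (\<lambda>q. swsum sw (q!1) (\<lambda>u v.
         \<beta> (ract (ract \<phi> (q!2 * S v) * ract Y (S u)) (S p2)) (p1 * q!0)))"
  proof (rule csum_cong)
    fix q :: "'h list"
    have L: "lin scA (*) (\<lambda>X. \<beta> (ract X (S p2)) (p1 * q!0))" by (auto intro!: LI)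
    show "\<beta> (ract (ract \<phi> (q!2) * Y) (S (p2 * q!1))) (p1 * q!0) = swsum sw (q!1) (\<lambda>u v.
         \<beta> (ract (ract \<phi> (q!2 * S v) * ract Y (S u)) (S p2)) (p1 * q!0))"
    proof -
      have e1: "ract (ract \<phi> (q!2) * Y) (S (p2 * q!1)) = ract (ract (ract \<phi> (q!2) * Y) (S (q!1))) (S p2)"
        by (simp only: S_mult ract_mult)
      have e2: "ract (ract \<phi> (q!2) * Y) (S (q!1)) = swsum sw (q!1) (\<lambda>u v. ract \<phi> (q!2 * S v) * ract Y (S u))"
        by (simp only: ract_prod_S ract_mult)
      show ?thesis by (simp only: e1 e2 swsum_lin[OF L])
    qed
  qed
  also have "\<dots> = csum sw (Suc (Suc (Suc 0))) h' (\<lambda>q.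
         \<beta> (ract (ract \<phi> (q!3 * S (q!2)) * ract Y (S (q!1))) (S p2)) (p1 * q!0))"
    by (rule K2'[OF vsk, where i=1]) (auto intro!: LI simp: length_Suc_conv)
  also have "\<dots> = csum sw (Suc (Suc 0)) h' (\<lambda>q.
         \<beta> (ract (ract \<phi> (scH (eps (q!2)) 1) * ract Y (S (q!1))) (S p2)) (p1 * q!0))"
    by (rule csum_trans_cong[OF contractR2'[OF vsk, where i=2 and
        W="\<lambda>u. \<beta> (ract (ract \<phi> (u!2) * ract Y (S (u!1))) (S p2)) (p1 * u!0)"]])
      (auto intro!: LI simp: length_Suc_conv)
  also have "\<dots> = csum sw (Suc (Suc 0)) h' (\<lambda>q.
         eps (q!2) * \<beta> (ract (\<phi> * ract Y (S (q!1))) (S p2)) (p1 * q!0))"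
    by (rule csum_cong) (simp add: ract_scale1 scA_multL[symmetric] lin_scale[OF ract_lin1] lin_scale[OF B1])
  also have "\<dots> = csum sw (Suc 0) h' (\<lambda>q. \<beta> (ract (\<phi> * ract Y (S (q!1))) (S p2)) (p1 * q!0))"
    by (rule counitR'[OF vsk, where i=1]) (auto intro!: LI simp: length_Suc_conv)
  finally show ?thesis .
qed

lemma per_pair:
  fixes \<beta> :: "'a \<Rightarrow> 'h \<Rightarrow> 'k"
  assumes B1: "\<And>y. lin scA (*) (\<lambda>x. \<beta> x y)" and B2: "\<And>x. lin scH (*) (\<beta> x)"
  shows "swsum sw h (\<lambda>h1 h2. swsum sw h' (\<lambda>k1 k2. swsum sw (h2 * k1)
            (\<lambda>a b. \<beta> (ract (ract \<phi> k2 * lact h1 \<psi>) (S b)) a)))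
       = swsum sw h (\<lambda>a b. swsum sw h' (\<lambda>c d. swsum sw a (\<lambda>a1 a2.
            \<beta> (ract \<phi> (S b) * act a1 (ract \<psi> (S d))) (a2 * c))))"
proof -
  note BL = lin_comp[OF B1] and BR = lin_comp[OF B2]
  note LI = linA BL BR vs_field
  have vsk: "vector_space ((*) :: 'k \<Rightarrow> 'k \<Rightarrow> 'k)" by (rule vs_field)
  have "swsum sw h (\<lambda>h1 h2. swsum sw h' (\<lambda>k1 k2. swsum sw (h2 * k1)
            (\<lambda>a b. \<beta> (ract (ract \<phi> k2 * lact h1 \<psi>) (S b)) a)))
     = swsum sw h (\<lambda>h1 h2. swsum sw h' (\<lambda>k1 k2. swsum sw h2 (\<lambda>a1 a2. swsum sw k1 (\<lambda>c1 c2.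
            \<beta> (ract (ract \<phi> k2 * lact h1 \<psi>) (S (a2 * c2))) (a1 * c1)))))"
  proof -
    have "swsum sw (h2 * k1) (\<lambda>a b. \<beta> (ract X (S b)) a)
        = swsum sw h2 (\<lambda>a1 a2. swsum sw k1 (\<lambda>c1 c2. \<beta> (ract X (S (a2 * c2))) (a1 * c1)))" for h2 k1 X
      by (rule sw_mult_sum[OF vsk]) (auto intro!: LI)
    then show ?thesis by simp
  qed
  also have "\<dots> = swsum sw h (\<lambda>h1 h2. swsum sw h2 (\<lambda>a1 a2. swsum sw h' (\<lambda>k1 k2. swsum sw k1 (\<lambda>c1 c2.
            \<beta> (ract (ract \<phi> k2 * lact h1 \<psi>) (S (a2 * c2))) (a1 * c1)))))"
    by (simp only: swsum_swap[of sw h'])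
  also have "\<dots> = csum sw (Suc 0) h (\<lambda>p. swsum sw (p!1) (\<lambda>a1 a2. swsum sw h' (\<lambda>k1 k2. swsum sw k1 (\<lambda>c1 c2.
            \<beta> (ract (ract \<phi> k2 * lact (p!0) \<psi>) (S (a2 * c2))) (a1 * c1)))))"
    by (simp add: csum_Suc csum_0)
  also have "\<dots> = csum sw (Suc (Suc 0)) h (\<lambda>p. swsum sw h' (\<lambda>k1 k2. swsum sw k1 (\<lambda>c1 c2.
            \<beta> (ract (ract \<phi> k2 * lact (p!0) \<psi>) (S (p!2 * c2))) (p!1 * c1))))"
    by (rule K2'[OF vsk, where i=1]) (auto intro!: LI simp: length_Suc_conv)
  also have "\<dots> = csum sw (Suc (Suc 0)) h (\<lambda>p. csum sw (Suc 0) h' (\<lambda>q.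
            \<beta> (ract (\<phi> * ract (lact (p!0) \<psi>) (S (q!1))) (S (p!2))) (p!1 * q!0)))"
    by (rule csum_cong) (rule inner1[OF B1 B2])
  also have "\<dots> = csum sw (Suc (Suc 0)) h (\<lambda>p. swsum sw (p!2) (\<lambda>u v. csum sw (Suc 0) h' (\<lambda>q.
            \<beta> (ract \<phi> (S v) * ract (ract (lact (p!0) \<psi>) (S (q!1))) (S u)) (p!1 * q!0))))"
  proof (rule csum_cong)
    fix p :: "'h list"
    have L: "lin scA (*) (\<lambda>X. \<beta> X c)" for c by (auto intro!: LI)
    show "csum sw (Suc 0) h' (\<lambda>q. \<beta> (ract (\<phi> * ract (lact (p!0) \<psi>) (S (q!1))) (S (p!2))) (p!1 * q!0))
       = swsum sw (p!2) (\<lambda>u v. csum sw (Suc 0) h' (\<lambda>q.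
            \<beta> (ract \<phi> (S v) * ract (ract (lact (p!0) \<psi>) (S (q!1))) (S u)) (p!1 * q!0)))"
      by (simp add: ract_prod_S swsum_lin[OF L] csum_swsum_swap)
  qed
  also have "\<dots> = csum sw (Suc (Suc (Suc 0))) h (\<lambda>p. csum sw (Suc 0) h' (\<lambda>q.
            \<beta> (ract \<phi> (S (p!3)) * ract (ract (lact (p!0) \<psi>) (S (q!1))) (S (p!2))) (p!1 * q!0)))"
    by (rule K2'[OF vsk, where i=2]) (auto intro!: LI simp: length_Suc_conv)
  also have "\<dots> = csum sw (Suc (Suc (Suc 0))) h (\<lambda>p. csum sw (Suc 0) h' (\<lambda>q.
            \<beta> (ract \<phi> (S (p!3)) * ract (ract (lact (p!0) \<psi>) (S (q!1))) (S (p!1))) (p!2 * q!0)))"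
    by (rule K3'[OF vsk, where i=1]) (auto intro!: LI simp: length_Suc_conv swp_def)
  also have "\<dots> = csum sw (Suc (Suc (Suc 0))) h (\<lambda>p. swsum sw h' (\<lambda>c d.
            \<beta> (ract \<phi> (S (p!3)) * ract (ract (lact (p!0) \<psi>) (S d)) (S (p!1))) (p!2 * c)))"
    by (rule csum_cong) (simp add: csum_Suc csum_0)
  also have "\<dots> = csum sw (Suc (Suc 0)) h (\<lambda>p. swsum sw (p!0) (\<lambda>e f. swsum sw h' (\<lambda>c d.
            \<beta> (ract \<phi> (S (p!2)) * ract (ract (lact e \<psi>) (S d)) (S f)) (p!1 * c))))"
    by (rule K2'[OF vsk, where i=0, symmetric]) (auto intro!: LI simp: length_Suc_conv)
  also have "\<dots> = csum sw (Suc (Suc 0)) h (\<lambda>p. swsum sw h' (\<lambda>c d.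
            \<beta> (ract \<phi> (S (p!2)) * act (p!0) (ract \<psi> (S d))) (p!1 * c)))"
  proof (rule csum_cong)
    fix p :: "'h list"
    have L: "lin scA (*) (\<lambda>Z. \<beta> (X * Z) c)" for X c by (auto intro!: LI)
    have "swsum sw h' (\<lambda>c d. \<beta> (ract \<phi> (S (p!2)) * act (p!0) (ract \<psi> (S d))) (p!1 * c))
        = swsum sw h' (\<lambda>c d. swsum sw (p!0) (\<lambda>e f.
            \<beta> (ract \<phi> (S (p!2)) * ract (ract (lact e \<psi>) (S d)) (S f)) (p!1 * c)))"
      by (simp only: act_eq lr_comm[symmetric] swsum_lin[OF L])
    also have "\<dots> = swsum sw (p!0) (\<lambda>e f. swsum sw h' (\<lambda>c d.
            \<beta> (ract \<phi> (S (p!2)) * ract (ract (lact e \<psi>) (S d)) (S f)) (p!1 * c)))"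
      by (rule swsum_swap)
    finally show "swsum sw (p!0) (\<lambda>e f. swsum sw h' (\<lambda>c d.
            \<beta> (ract \<phi> (S (p!2)) * ract (ract (lact e \<psi>) (S d)) (S f)) (p!1 * c)))
        = swsum sw h' (\<lambda>c d. \<beta> (ract \<phi> (S (p!2)) * act (p!0) (ract \<psi> (S d))) (p!1 * c))" by simp
  qed
  also have "\<dots> = csum sw (Suc 0) h (\<lambda>p. swsum sw (p!0) (\<lambda>a1 a2. swsum sw h' (\<lambda>c d.
            \<beta> (ract \<phi> (S (p!1)) * act a1 (ract \<psi> (S d))) (a2 * c))))"
    by (rule K2'[OF vsk, where i=0, symmetric]) (auto intro!: LI simp: length_Suc_conv act_eq)
  also have "\<dots> = swsum sw h (\<lambda>a b. swsum sw a (\<lambda>a1 a2. swsum sw h' (\<lambda>c d.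
            \<beta> (ract \<phi> (S b) * act a1 (ract \<psi> (S d))) (a2 * c))))"
    by (simp add: csum_Suc csum_0)
  also have "\<dots> = swsum sw h (\<lambda>a b. swsum sw h' (\<lambda>c d. swsum sw a (\<lambda>a1 a2.
            \<beta> (ract \<phi> (S b) * act a1 (ract \<psi> (S d))) (a2 * c))))"
    by (rule arg_cong[where f="swsum sw h"], rule ext, rule ext, rule swsum_swap)
  finally show ?thesis .
qed

end

definition sb :: "('a \<Rightarrow> 'h \<Rightarrow> 'k::comm_monoid_add) \<Rightarrow> ('a \<times> 'h) list \<Rightarrow> 'k" where
  "sb \<beta> xs = sum_list (map (\<lambda>(x, y). \<beta> x y) xs)"

lemma teq2_refl: "teq2 sX sY xs xs"
  unfolding teq2_def using module.span_zero[OF fscale_module] by simp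

context bimod begin

definition Phi :: "('a \<times> 'h) list \<Rightarrow> ('a \<times> 'h) list" where
  "Phi xs = concat (map (\<lambda>(\<phi>, h). map (\<lambda>(h1, h2). (ract \<phi> (S h2), h1)) (sw h)) xs)"

definition Psi :: "('a \<times> 'h) list \<Rightarrow> ('a \<times> 'h) list" where
  "Psi xs = concat (map (\<lambda>(\<phi>, h). map (\<lambda>(h1, h2). (ract \<phi> h2, h1)) (sw h)) xs)"

lemma sb_Phi: "sb \<beta> (Phi xs) = sb (\<lambda>\<phi> h. swsum sw h (\<lambda>a b. \<beta> (ract \<phi> (S b)) a)) xs"
  unfolding sb_def Phi_def swsum_def by (simp add: sum_list_concat_map split_def o_def)

lemma sb_Psi: "sb \<beta> (Psi xs) = sb (\<lambda>\<phi> h. swsum sw h (\<lambda>a b. \<beta> (ract \<phi> b) a)) xs"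
  unfolding sb_def Psi_def swsum_def by (simp add: sum_list_concat_map split_def o_def)

lemma sb_m1: "sb \<beta> (Phi (lr_smash_mult sw lact ract xs ys)) = sum_list (map (\<lambda>x. sum_list (map (\<lambda>y.
    swsum sw (snd x) (\<lambda>h1 h2. swsum sw (snd y) (\<lambda>k1 k2. swsum sw (h2 * k1)
            (\<lambda>a b. \<beta> (ract (ract (fst x) k2 * lact h1 (fst y)) (S b)) a)))) ys)) xs)"
  unfolding sb_def Phi_def swsum_def lr_smash_mult_def by (simp add: sum_list_concat_map split_def o_def)

lemma sb_m2: "sb \<beta> (smash_mult sw act (Phi xs) (Phi ys)) = sum_list (map (\<lambda>x. sum_list (map (\<lambda>y.
    swsum sw (snd x) (\<lambda>a b. swsum sw (snd y) (\<lambda>c d. swsum sw a (\<lambda>a1 a2.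
            \<beta> (ract (fst x) (S b) * act a1 (ract (fst y) (S d))) (a2 * c))))) ys)) xs)"
  unfolding sb_def Phi_def swsum_def smash_mult_def
  by (simp add: sum_list_concat_map split_def o_def sum_list_swap[of _ ys])


lemma bil_Phi:
  assumes B: "bil scA scH (*) \<beta>"
  shows "bil scA scH (*) (\<lambda>\<phi> h. swsum sw h (\<lambda>a b. \<beta> (ract \<phi> (S b)) a))"
proof -
  have B1: "\<And>y. lin scA (*) (\<lambda>x. \<beta> x y)" and B2: "\<And>x. lin scH (*) (\<beta> x)" using B by (auto simp: bil_def)
  note LI = linA lin_comp[OF B1] lin_comp[OF B2] vs_field
  show ?thesis unfolding bil_def by (auto intro!: LI)
qed

lemma bil_Psi:
  assumes B: "bil scA scH (*) \<beta>"
  shows "bil scA scH (*) (\<lambda>\<phi> h. swsum sw h (\<lambda>a b. \<beta> (ract \<phi> b) a))"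
proof -
  have B1: "\<And>y. lin scA (*) (\<lambda>x. \<beta> x y)" and B2: "\<And>x. lin scH (*) (\<beta> x)" using B by (auto simp: bil_def)
  note LI = linA lin_comp[OF B1] lin_comp[OF B2] vs_field
  show ?thesis unfolding bil_def by (auto intro!: LI)
qed

lemma PsiPhi_pt:
  assumes B: "bil scA scH (*) \<beta>"
  shows "swsum sw h (\<lambda>a b. swsum sw a (\<lambda>c d. \<beta> (ract (ract \<phi> (S b)) d) c)) = \<beta> \<phi> h"
proof -
  have B1: "\<And>y. lin scA (*) (\<lambda>x. \<beta> x y)" and B2: "\<And>x. lin scH (*) (\<beta> x)" using B by (auto simp: bil_def)
  note LI = linA lin_comp[OF B1] lin_comp[OF B2] vs_field
  have vsk: "vector_space ((*) :: 'k \<Rightarrow> 'k \<Rightarrow> 'k)" by (rule vs_field)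
  have "swsum sw h (\<lambda>a b. swsum sw a (\<lambda>c d. \<beta> (ract (ract \<phi> (S b)) d) c))
      = csum sw (Suc 0) h (\<lambda>t. swsum sw (t!0) (\<lambda>c d. \<beta> (ract \<phi> (S (t!1) * d)) c))"
    by (simp add: csum_Suc csum_0 ract_mult)
  also have "\<dots> = csum sw (Suc (Suc 0)) h (\<lambda>t. \<beta> (ract \<phi> (S (t!2) * t!1)) (t!0))"
    by (rule K2'[OF vsk, where i=0]) (auto intro!: LI simp: length_Suc_conv)
  also have "\<dots> = csum sw (Suc 0) h (\<lambda>t. \<beta> (ract \<phi> (scH (eps (t!1)) 1)) (t!0))"
    by (rule csum_trans_cong[OF contractL2'[OF vsk, where i=1 and W="\<lambda>u. \<beta> (ract \<phi> (u!1)) (u!0)"]])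
      (auto intro!: LI simp: length_Suc_conv)
  also have "\<dots> = swsum sw h (\<lambda>a b. eps b * \<beta> \<phi> a)"
    by (simp add: csum_Suc csum_0 ract_scale1 lin_scale[OF B1])
  also have "\<dots> = \<beta> \<phi> h" by (rule counitR_lin[OF B2])
  finally show ?thesis .
qed

lemma PhiPsi_pt:
  assumes B: "bil scA scH (*) \<beta>"
  shows "swsum sw h (\<lambda>a b. swsum sw a (\<lambda>c d. \<beta> (ract (ract \<phi> b) (S d)) c)) = \<beta> \<phi> h"
proof -
  have B1: "\<And>y. lin scA (*) (\<lambda>x. \<beta> x y)" and B2: "\<And>x. lin scH (*) (\<beta> x)" using B by (auto simp: bil_def)
  note LI = linA lin_comp[OF B1] lin_comp[OF B2] vs_field
  have vsk: "vector_space ((*) :: 'k \<Rightarrow> 'k \<Rightarrow> 'k)" by (rule vs_field)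
  have "swsum sw h (\<lambda>a b. swsum sw a (\<lambda>c d. \<beta> (ract (ract \<phi> b) (S d)) c))
      = csum sw (Suc 0) h (\<lambda>t. swsum sw (t!0) (\<lambda>c d. \<beta> (ract \<phi> (t!1 * S d)) c))"
    by (simp add: csum_Suc csum_0 ract_mult)
  also have "\<dots> = csum sw (Suc (Suc 0)) h (\<lambda>t. \<beta> (ract \<phi> (t!2 * S (t!1))) (t!0))"
    by (rule K2'[OF vsk, where i=0]) (auto intro!: LI simp: length_Suc_conv)
  also have "\<dots> = csum sw (Suc 0) h (\<lambda>t. \<beta> (ract \<phi> (scH (eps (t!1)) 1)) (t!0))"
    by (rule csum_trans_cong[OF contractR2'[OF vsk, where i=1 and W="\<lambda>u. \<beta> (ract \<phi> (u!1)) (u!0)"]])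
      (auto intro!: LI simp: length_Suc_conv)
  also have "\<dots> = swsum sw h (\<lambda>a b. eps b * \<beta> \<phi> a)"
    by (simp add: csum_Suc csum_0 ract_scale1 lin_scale[OF B1])
  also have "\<dots> = \<beta> \<phi> h" by (rule counitR_lin[OF B2])
  finally show ?thesis .
qed

lemma sb_PsiPhi: "bil scA scH (*) \<beta> \<Longrightarrow> sb \<beta> (Psi (Phi xs)) = sb \<beta> xs"
  unfolding sb_Psi sb_Phi by (simp add: sb_def PsiPhi_pt[of \<beta>] split_def cong: map_cong)

lemma sb_PhiPsi: "bil scA scH (*) \<beta> \<Longrightarrow> sb \<beta> (Phi (Psi xs)) = sb \<beta> xs"
  unfolding sb_Psi sb_Phi by (simp add: sb_def PhiPsi_pt[of \<beta>] split_def cong: map_cong)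

lemma Phi_teq: "teq2 scA scH xs ys \<Longrightarrow> teq2 scA scH (Phi xs) (Phi ys)"
  apply (rule teq2I)
  using teq2_sum[OF vs_field bil_Phi] by (simp add: sb_Phi[unfolded sb_def])

lemma Psi_teq: "teq2 scA scH xs ys \<Longrightarrow> teq2 scA scH (Psi xs) (Psi ys)"
  apply (rule teq2I)
  using teq2_sum[OF vs_field bil_Psi] by (simp add: sb_Psi[unfolded sb_def])


lemma teq2_sb: "(\<And>\<beta>. bil scA scH (*) \<beta> \<Longrightarrow> sb \<beta> xs = sb \<beta> ys) \<Longrightarrow> teq2 scA scH xs ys"
  by (rule teq2I) (simp add: sb_def)

lemma sb_teq: "teq2 scA scH xs ys \<Longrightarrow> bil scA scH (*) \<beta> \<Longrightarrow> sb \<beta> xs = sb \<beta> ys"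
  unfolding sb_def by (rule teq2_sum[OF vs_field])

lemma iso: "tensor_alg_iso scA scH (lr_smash_mult sw lact ract) (smash_mult sw act) Phi"
  unfolding tensor_alg_iso_def
proof (intro conjI allI impI)
  fix xs ys assume "teq2 scA scH xs ys"
  then show "teq2 scA scH (Phi xs) (Phi ys)" by (rule Phi_teq)
next
  fix xs ys show "teq2 scA scH (Phi (xs @ ys)) (Phi xs @ Phi ys)"
    by (simp add: Phi_def teq2_refl)
next
  fix c xs show "teq2 scA scH (Phi (map (\<lambda>(a, h). (scA c a, h)) xs)) (map (\<lambda>(a, h). (scA c a, h)) (Phi xs))"
  proof -
    have "Phi (map (\<lambda>(a, h). (scA c a, h)) xs) = map (\<lambda>(a, h). (scA c a, h)) (Phi xs)"
      by (simp add: Phi_def map_concat split_def o_def lin_scale[OF ract_lin1])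
    then show ?thesis by (simp add: teq2_refl)
  qed
next
  fix xs ys assume e: "teq2 scA scH (Phi xs) (Phi ys)"
  show "teq2 scA scH xs ys"
  proof (rule teq2_sb)
    fix \<beta> :: "'a \<Rightarrow> 'h \<Rightarrow> 'k" assume B: "bil scA scH (*) \<beta>"
    have "sb \<beta> xs = sb \<beta> (Psi (Phi xs))" by (simp add: sb_PsiPhi[OF B])
    also have "\<dots> = sb \<beta> (Psi (Phi ys))" by (rule sb_teq[OF Psi_teq[OF e] B])
    also have "\<dots> = sb \<beta> ys" by (simp add: sb_PsiPhi[OF B])
    finally show "sb \<beta> xs = sb \<beta> ys" .
  qed
next
  fix ys show "\<exists>xs. teq2 scA scH (Phi xs) ys"
    by (rule exI[of _ "Psi ys"], rule teq2_sb) (simp add: sb_PhiPsi)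
next
  fix xs ys show "teq2 scA scH (Phi (lr_smash_mult sw lact ract xs ys)) (smash_mult sw act (Phi xs) (Phi ys))"
  proof (rule teq2_sb)
    fix \<beta> :: "'a \<Rightarrow> 'h \<Rightarrow> 'k" assume B: "bil scA scH (*) \<beta>"
    have B1: "\<And>y. lin scA (*) (\<lambda>x. \<beta> x y)" and B2: "\<And>x. lin scH (*) (\<beta> x)" using B by (auto simp: bil_def)
    show "sb \<beta> (Phi (lr_smash_mult sw lact ract xs ys)) = sb \<beta> (smash_mult sw act (Phi xs) (Phi ys))"
      unfolding sb_m1 sb_m2 by (simp add: per_pair[OF B1 B2])
  qed
next
  show "teq2 scA scH (Phi [(1, 1)]) [(1, 1)]"
  proof (rule teq2_sb)
    fix \<beta> :: "'a \<Rightarrow> 'h \<Rightarrow> 'k" assume B: "bil scA scH (*) \<beta>"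
    have B1: "\<And>y. lin scA (*) (\<lambda>x. \<beta> x y)" and B2: "\<And>x. lin scH (*) (\<beta> x)" using B by (auto simp: bil_def)
    note LI = linA lin_comp[OF B1] lin_comp[OF B2] vs_field
    have "swsum sw 1 (\<lambda>a b. \<beta> (ract 1 (S b)) a) = \<beta> (ract 1 (S 1)) 1"
      by (rule sw_one_sum[OF vs_field]) (auto intro!: LI)
    then show "sb \<beta> (Phi [(1, 1)]) = sb \<beta> [(1, 1)]"
      unfolding sb_Phi by (simp add: sb_def S_one ract_one)
  qed
qed

end

theorem proposition3p1:
  fixes scH :: "'k::field \<Rightarrow> 'h::ring_1 \<Rightarrow> 'h"
    and sw :: "'h \<Rightarrow> ('h \<times> 'h) list"
    and eps :: "'h \<Rightarrow> 'k"
    and S :: "'h \<Rightarrow> 'h"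
    and scA :: "'k \<Rightarrow> 'a::ring_1 \<Rightarrow> 'a"
    and lact :: "'h \<Rightarrow> 'a \<Rightarrow> 'a"
    and ract :: "'a \<Rightarrow> 'h \<Rightarrow> 'a"
  assumes "hopf_algebra scH sw eps S"
    and "cocommutative scH sw"
    and "bimodule_algebra scH sw eps scA lact ract"
  shows "left_module_algebra scH sw eps scA (conj_action sw S lact ract)
         \<and> (\<exists>\<Phi>. tensor_alg_iso scA scH (lr_smash_mult sw lact ract)
                   (smash_mult sw (conj_action sw S lact ract)) \<Phi>)"
proof -
  interpret bimod scH sw eps S scA lact ract
    using assms by (simp add: bimod_def hopf_def bimod_axioms_def)
  show ?thesis using left_mod iso by blast
qed


end
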